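(* If $X=(X_1,\dots,X_d)$ is a $d$-dimensional $1$-Meixner random vector, then its Laplace transform $\varphi(\mathbf t)=E[\exp(\mathbf t\cdot X)]$ is well defined (finite) and twice differentiable with continuous second order partial derivatives on some neighborhood $V$ of $\mathbf 0\in\mathbb R^d$.
   Context: Let $X_1,\dots,X_d$ be real random variables on $(\Omega,\mathcal F,P)$ with finite moments of all orders. $F$ is the space of polynomial random variables $f(X_1,\dots,X_d)$ (complex coefficients), $F_n$ those of degree $\le n$, $G_0=F_0$, $G_n=F_n\ominus F_{n-1}$ in $L^2(P)$. For $f\in G_n$, $X_if\in G_{n-1}\oplus G_n\oplus G_{n+1}$; its components define $a^-(i)f,a^0(i)f,a^+(i)f$ respectively, extended linearly to $F$. $U_i:=a^-(i)+\tfrac12a^0(i)$. $(X_1,\dots,X_d)$ is a $d$-dimensional $1$-Meixner random vector if there are reals $\alpha_{i,j,k},\beta_{i,j}$ with $[U_i,X_j]=\sum_k\alpha_{i,j,k}X_k+\beta_{i,j}I$ on $F$ for all $i,j$ (with $X_j$ the multiplication operator, $I$ the identity). $\mathbf t\cdot X=\sum_it_iX_i$. *)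

theory Defs
  imports "HOL-Analysis.Analysis" "HOL-Probability.Probability"
begin

definition monomialRV :: "('d::finite \<Rightarrow> 'a \<Rightarrow> real) \<Rightarrow> ('d \<Rightarrow> nat) \<Rightarrow> 'a \<Rightarrow> real" where
  "monomialRV X k = (\<lambda>\<omega>. \<Prod>i\<in>UNIV. X i \<omega> ^ k i)"

definition polyRV_deg :: "('d::finite \<Rightarrow> 'a \<Rightarrow> real) \<Rightarrow> nat \<Rightarrow> ('a \<Rightarrow> complex) set" where
  "polyRV_deg X n = {f. \<exists>K c. finite K \<and> (\<forall>k\<in>K. (\<Sum>i\<in>UNIV. k i) \<le> n) \<and>
       f = (\<lambda>\<omega>. \<Sum>k\<in>K. c k * complex_of_real (monomialRV X k \<omega>))}"

definition polyRV :: "('d::finite \<Rightarrow> 'a \<Rightarrow> real) \<Rightarrow> ('a \<Rightarrow> complex) set" where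
  "polyRV X = (\<Union>n. polyRV_deg X n)"

definition L2inner :: "'a measure \<Rightarrow> ('a \<Rightarrow> complex) \<Rightarrow> ('a \<Rightarrow> complex) \<Rightarrow> complex" where
  "L2inner M f g = integral\<^sup>L M (\<lambda>\<omega>. f \<omega> * cnj (g \<omega>))"

text \<open>Orthogonal projection in L^2(P) onto a (finite-dimensional) subspace S of functions;
  determined up to P-a.e. equality.\<close>
definition L2proj :: "'a measure \<Rightarrow> ('a \<Rightarrow> complex) set \<Rightarrow> ('a \<Rightarrow> complex) \<Rightarrow> 'a \<Rightarrow> complex" where
  "L2proj M S h = (SOME p. p \<in> S \<and> (\<forall>g\<in>S. L2inner M (\<lambda>\<omega>. h \<omega> - p \<omega>) g = 0))"

text \<open>Component of h in G_n = F_n \<ominus> F_{n-1} (with F_{-1} = 0).\<close>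
fun Gcomp :: "'a measure \<Rightarrow> ('d::finite \<Rightarrow> 'a \<Rightarrow> real) \<Rightarrow> nat \<Rightarrow> ('a \<Rightarrow> complex) \<Rightarrow> 'a \<Rightarrow> complex" where
  "Gcomp M X 0 h = L2proj M (polyRV_deg X 0) h"
| "Gcomp M X (Suc n) h =
     (\<lambda>\<omega>. L2proj M (polyRV_deg X (Suc n)) h \<omega> - L2proj M (polyRV_deg X n) h \<omega>)"

definition mulX :: "('d::finite \<Rightarrow> 'a \<Rightarrow> real) \<Rightarrow> 'd \<Rightarrow> ('a \<Rightarrow> complex) \<Rightarrow> 'a \<Rightarrow> complex" where
  "mulX X i f = (\<lambda>\<omega>. complex_of_real (X i \<omega>) * f \<omega>)"

text \<open>Annihilation a^-(i) and preservation a^0(i) operators, extended linearly to F: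
  for g in G_n, a^-(i) g is the G_{n-1} component and a^0(i) g the G_n component of X_i g.\<close>
definition degRV :: "('d::finite \<Rightarrow> 'a \<Rightarrow> real) \<Rightarrow> ('a \<Rightarrow> complex) \<Rightarrow> nat" where
  "degRV X f = (LEAST n. f \<in> polyRV_deg X n)"

definition annihOp :: "'a measure \<Rightarrow> ('d::finite \<Rightarrow> 'a \<Rightarrow> real) \<Rightarrow> 'd \<Rightarrow> ('a \<Rightarrow> complex) \<Rightarrow> 'a \<Rightarrow> complex" where
  "annihOp M X i f = (\<lambda>\<omega>. \<Sum>n\<in>{1..degRV X f}.
      Gcomp M X (n - 1) (mulX X i (Gcomp M X n f)) \<omega>)"

definition preservOp :: "'a measure \<Rightarrow> ('d::finite \<Rightarrow> 'a \<Rightarrow> real) \<Rightarrow> 'd \<Rightarrow> ('a \<Rightarrow> complex) \<Rightarrow> 'a \<Rightarrow> complex" where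
  "preservOp M X i f = (\<lambda>\<omega>. \<Sum>n\<in>{0..degRV X f}.
      Gcomp M X n (mulX X i (Gcomp M X n f)) \<omega>)"

definition Uop :: "'a measure \<Rightarrow> ('d::finite \<Rightarrow> 'a \<Rightarrow> real) \<Rightarrow> 'd \<Rightarrow> ('a \<Rightarrow> complex) \<Rightarrow> 'a \<Rightarrow> complex" where
  "Uop M X i f = (\<lambda>\<omega>. annihOp M X i f \<omega> + (1/2) * preservOp M X i f \<omega>)"

definition finite_moments :: "'a measure \<Rightarrow> ('d::finite \<Rightarrow> 'a \<Rightarrow> real) \<Rightarrow> bool" where
  "finite_moments M X \<longleftrightarrow> (\<forall>i. X i \<in> borel_measurable M \<and>
      (\<forall>n::nat. integrable M (\<lambda>\<omega>. \<bar>X i \<omega>\<bar> ^ n)))"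

text \<open>d-dimensional 1-Meixner random vector: [U_i, X_j] = \<Sum>_k \<alpha>_{ijk} X_k + \<beta>_{ij} I on F
  (equalities of random variables, i.e. P-a.e.).\<close>
definition one_Meixner :: "'a measure \<Rightarrow> ('d::finite \<Rightarrow> 'a \<Rightarrow> real) \<Rightarrow> bool" where
  "one_Meixner M X \<longleftrightarrow> finite_moments M X \<and>
     (\<exists>(\<alpha>::'d \<Rightarrow> 'd \<Rightarrow> 'd \<Rightarrow> real) (\<beta>::'d \<Rightarrow> 'd \<Rightarrow> real). \<forall>i j. \<forall>f\<in>polyRV X.
        AE \<omega> in M. Uop M X i (mulX X j f) \<omega> - complex_of_real (X j \<omega>) * Uop M X i f \<omega>
          = (\<Sum>k\<in>UNIV. complex_of_real (\<alpha> i j k) * complex_of_real (X k \<omega>) * f \<omega>)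
            + complex_of_real (\<beta> i j) * f \<omega>)"

definition laplaceRV :: "'a measure \<Rightarrow> ('d::finite \<Rightarrow> 'a \<Rightarrow> real) \<Rightarrow> real^'d \<Rightarrow> real" where
  "laplaceRV M X t = integral\<^sup>L M (\<lambda>\<omega>. exp (\<Sum>i\<in>UNIV. t $ i * X i \<omega>))"

definition partialD :: "'d::finite \<Rightarrow> (real^'d \<Rightarrow> real) \<Rightarrow> real^'d \<Rightarrow> real" where
  "partialD i f t = deriv (\<lambda>s. f (t + s *\<^sub>R axis i 1)) 0"

definition has_partial_at :: "'d::finite \<Rightarrow> (real^'d \<Rightarrow> real) \<Rightarrow> real^'d \<Rightarrow> bool" where
  "has_partial_at i f t \<longleftrightarrow> (\<lambda>s. f (t + s *\<^sub>R axis i 1)) differentiable (at 0)"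

end

theory Submission
  imports Defs
begin

locale mx = prob_space M for M :: "'a measure" +
  fixes X :: "'d::finite \<Rightarrow> 'a \<Rightarrow> real"
  assumes fm: "finite_moments M X"
begin

lemma Xmeas[measurable]: "X i \<in> borel_measurable M"
  using fm by (simp add: finite_moments_def)

lemma Xint: "integrable M (\<lambda>\<omega>. \<bar>X i \<omega>\<bar> ^ n)"
  using fm by (simp add: finite_moments_def)

definition Sm :: "'a \<Rightarrow> real" where "Sm \<omega> = (\<Sum>i\<in>UNIV. \<bar>X i \<omega>\<bar>)"

lemma Sm_meas[measurable]: "Sm \<in> borel_measurable M"
  unfolding Sm_def by measurable

lemma Sm_nonneg: "0 \<le> Sm \<omega>"
  unfolding Sm_def by (simp add: sum_nonneg)

lemma X_le_Sm: "\<bar>X i \<omega>\<bar> \<le> Sm \<omega>"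
  unfolding Sm_def by (rule member_le_sum) auto

lemma Sm_le_max: "\<exists>j. Sm \<omega> \<le> real CARD('d) * \<bar>X j \<omega>\<bar>"
proof -
  let ?m = "Max (range (\<lambda>i. \<bar>X i \<omega>\<bar>))"
  have "?m \<in> range (\<lambda>i. \<bar>X i \<omega>\<bar>)" by (rule Max_in) auto
  then obtain j where j: "?m = \<bar>X j \<omega>\<bar>" by blast
  have "Sm \<omega> \<le> of_nat (card (UNIV::'d set)) * ?m"
    unfolding Sm_def by (rule sum_bounded_above) auto
  with j show ?thesis by auto
qed

lemma mono_Sm_bound:
  fixes g :: "real \<Rightarrow> real"
  assumes "mono g" "\<And>s. 0 \<le> g s"
  shows "g (Sm \<omega>) \<le> (\<Sum>i\<in>UNIV. g (real CARD('d) * \<bar>X i \<omega>\<bar>))"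
proof -
  obtain j where j: "Sm \<omega> \<le> real CARD('d) * \<bar>X j \<omega>\<bar>" using Sm_le_max by blast
  have "g (Sm \<omega>) \<le> g (real CARD('d) * \<bar>X j \<omega>\<bar>)" using assms(1) j by (simp add: monoD)
  also have "\<dots> \<le> (\<Sum>i\<in>UNIV. g (real CARD('d) * \<bar>X i \<omega>\<bar>))"
    by (rule member_le_sum[where f="\<lambda>i. g (real CARD('d) * \<bar>X i \<omega>\<bar>)"]) (auto simp: assms(2))
  finally show ?thesis .
qed

lemma one_plus_pow_le: "(1 + x) ^ N \<le> 2 ^ N * (1 + x ^ N)" if "0 \<le> (x::real)"
proof (cases "x \<le> 1")
  case True
  have "(1 + x) ^ N \<le> 2 ^ N" using True that by (intro power_mono) auto
  also have "\<dots> \<le> 2 ^ N * (1 + x ^ N)" using that by simp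
  finally show ?thesis .
next
  case False
  have "(1 + x) ^ N \<le> (2 * x) ^ N" using False that by (intro power_mono) auto
  also have "\<dots> = 2 ^ N * x ^ N" by (simp add: power_mult_distrib)
  also have "\<dots> \<le> 2 ^ N * (1 + x ^ N)" by simp
  finally show ?thesis .
qed

lemma int_pow_Sm: "integrable M (\<lambda>\<omega>. (1 + Sm \<omega>) ^ N)"
proof (rule Bochner_Integration.integrable_bound)
  let ?d = "real CARD('d)"
  show "integrable M (\<lambda>\<omega>. 2 ^ N * (1 + (\<Sum>i\<in>UNIV. \<bar>?d * X i \<omega>\<bar> ^ N)))"
  proof -
    have Xi': "integrable M (\<lambda>\<omega>. \<bar>?d * X i \<omega>\<bar> ^ N)" for i
      using integrable_mult_right[OF Xint[of i N], of "?d ^ N"]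
      by (simp add: abs_mult power_mult_distrib)
    show ?thesis using Xi' by (intro integrable_mult_right integrable_add integrable_sum) auto
  qed
  show "(\<lambda>\<omega>. (1 + Sm \<omega>) ^ N) \<in> borel_measurable M" by measurable
  show "AE \<omega> in M. norm ((1 + Sm \<omega>) ^ N) \<le> norm (2 ^ N * (1 + (\<Sum>i\<in>UNIV. \<bar>?d * X i \<omega>\<bar> ^ N)))"
  proof (intro AE_I2)
    fix \<omega>
    have a: "Sm \<omega> ^ N \<le> (\<Sum>i\<in>UNIV. (?d * \<bar>X i \<omega>\<bar>) ^ N)"
    proof -
      obtain j where j: "Sm \<omega> \<le> ?d * \<bar>X j \<omega>\<bar>" using Sm_le_max by blast
      have "Sm \<omega> ^ N \<le> (?d * \<bar>X j \<omega>\<bar>) ^ N" using j Sm_nonneg by (intro power_mono) auto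
      also have "\<dots> \<le> (\<Sum>i\<in>UNIV. (?d * \<bar>X i \<omega>\<bar>) ^ N)"
        by (rule member_le_sum[where f="\<lambda>i. (?d * \<bar>X i \<omega>\<bar>) ^ N"]) auto
      finally show ?thesis .
    qed
    have "(1 + Sm \<omega>) ^ N \<le> 2 ^ N * (1 + Sm \<omega> ^ N)" by (rule one_plus_pow_le[OF Sm_nonneg])
    also have "\<dots> \<le> 2 ^ N * (1 + (\<Sum>i\<in>UNIV. \<bar>?d * X i \<omega>\<bar> ^ N))"
      using a by (simp add: abs_mult)
    finally show "norm ((1 + Sm \<omega>) ^ N) \<le> norm (2 ^ N * (1 + (\<Sum>i\<in>UNIV. \<bar>?d * X i \<omega>\<bar> ^ N)))"
      using Sm_nonneg[of \<omega>] by (simp add: sum_nonneg)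
  qed
qed

end

context mx begin

definition tame :: "('a \<Rightarrow> complex) \<Rightarrow> bool" where
  "tame f \<longleftrightarrow> f \<in> borel_measurable M \<and> (\<exists>C N. 0 \<le> C \<and> (\<forall>\<omega>. cmod (f \<omega>) \<le> C * (1 + Sm \<omega>) ^ N))"

lemma tame_meas: "tame f \<Longrightarrow> f \<in> borel_measurable M" by (simp add: tame_def)

lemma tame_integrable: assumes "tame f" shows "integrable M f"
proof -
  from assms obtain C N where C: "0 \<le> C" "\<And>\<omega>. cmod (f \<omega>) \<le> C * (1 + Sm \<omega>) ^ N"
    and m: "f \<in> borel_measurable M"
    by (auto simp: tame_def)
  show ?thesis
  proof (rule Bochner_Integration.integrable_bound)
    show "integrable M (\<lambda>\<omega>. C * (1 + Sm \<omega>) ^ N)" by (intro integrable_mult_right int_pow_Sm)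
    show "f \<in> borel_measurable M" by (rule m)
    show "AE \<omega> in M. norm (f \<omega>) \<le> norm (C * (1 + Sm \<omega>) ^ N)"
    proof (intro AE_I2)
      fix \<omega> show "norm (f \<omega>) \<le> norm (C * (1 + Sm \<omega>) ^ N)"
        using C(2)[of \<omega>] Sm_nonneg[of \<omega>] C(1) by (simp add: abs_mult)
    qed
  qed
qed

lemma tameI: "f \<in> borel_measurable M \<Longrightarrow> 0 \<le> C \<Longrightarrow> (\<And>\<omega>. cmod (f \<omega>) \<le> C * (1 + Sm \<omega>) ^ N) \<Longrightarrow> tame f"
  unfolding tame_def by blast

lemma tame_add: assumes "tame f" "tame g" shows "tame (\<lambda>\<omega>. f \<omega> + g \<omega>)"
proof -
  obtain C1 N1 where 1: "0 \<le> C1" "\<And>\<omega>. cmod (f \<omega>) \<le> C1 * (1 + Sm \<omega>) ^ N1"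
    using assms(1) by (auto simp: tame_def)
  obtain C2 N2 where 2: "0 \<le> C2" "\<And>\<omega>. cmod (g \<omega>) \<le> C2 * (1 + Sm \<omega>) ^ N2"
    using assms(2) by (auto simp: tame_def)
  have b: "cmod (f \<omega> + g \<omega>) \<le> (C1 + C2) * (1 + Sm \<omega>) ^ (N1 + N2)" for \<omega>
  proof -
    have p1: "(1 + Sm \<omega>) ^ N1 \<le> (1 + Sm \<omega>) ^ (N1 + N2)" using Sm_nonneg[of \<omega>] by (intro power_increasing) auto
    have p2: "(1 + Sm \<omega>) ^ N2 \<le> (1 + Sm \<omega>) ^ (N1 + N2)" using Sm_nonneg[of \<omega>] by (intro power_increasing) auto
    have "cmod (f \<omega> + g \<omega>) \<le> cmod (f \<omega>) + cmod (g \<omega>)" by (rule norm_triangle_ineq)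
    also have "\<dots> \<le> C1 * (1 + Sm \<omega>) ^ N1 + C2 * (1 + Sm \<omega>) ^ N2" using 1 2 by (intro add_mono) auto
    also have "\<dots> \<le> C1 * (1 + Sm \<omega>) ^ (N1+N2) + C2 * (1 + Sm \<omega>) ^ (N1+N2)"
      using p1 p2 1 2 by (intro add_mono mult_left_mono) auto
    finally show ?thesis by (simp add: algebra_simps)
  qed
  have m: "(\<lambda>\<omega>. f \<omega> + g \<omega>) \<in> borel_measurable M" using assms by (auto simp: tame_def)
  show ?thesis by (rule tameI[OF m _ b]) (use 1 2 in auto)
qed

lemma tame_mult: assumes "tame f" "tame g" shows "tame (\<lambda>\<omega>. f \<omega> * g \<omega>)"
proof -
  obtain C1 N1 where 1: "0 \<le> C1" "\<And>\<omega>. cmod (f \<omega>) \<le> C1 * (1 + Sm \<omega>) ^ N1"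
    using assms(1) by (auto simp: tame_def)
  obtain C2 N2 where 2: "0 \<le> C2" "\<And>\<omega>. cmod (g \<omega>) \<le> C2 * (1 + Sm \<omega>) ^ N2"
    using assms(2) by (auto simp: tame_def)
  have b: "cmod (f \<omega> * g \<omega>) \<le> (C1 * C2) * (1 + Sm \<omega>) ^ (N1 + N2)" for \<omega>
  proof -
    have "cmod (f \<omega> * g \<omega>) = cmod (f \<omega>) * cmod (g \<omega>)" by (simp add: norm_mult)
    also have "\<dots> \<le> (C1 * (1 + Sm \<omega>) ^ N1) * (C2 * (1 + Sm \<omega>) ^ N2)"
      using 1 2 Sm_nonneg[of \<omega>] by (intro mult_mono) auto
    also have "\<dots> = (C1 * C2) * (1 + Sm \<omega>) ^ (N1 + N2)" by (simp add: power_add algebra_simps)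
    finally show ?thesis .
  qed
  have m: "(\<lambda>\<omega>. f \<omega> * g \<omega>) \<in> borel_measurable M" using assms by (auto simp: tame_def)
  show ?thesis by (rule tameI[OF m _ b]) (use 1 2 in auto)
qed

lemma tame_const: "tame (\<lambda>\<omega>. c)"
  by (rule tameI[where C="cmod c" and N=0]) auto

lemma tame_scale: "tame f \<Longrightarrow> tame (\<lambda>\<omega>. c * f \<omega>)"
  using tame_mult[OF tame_const] by blast

lemma tame_diff: assumes "tame f" "tame g" shows "tame (\<lambda>\<omega>. f \<omega> - g \<omega>)"
proof -
  have "tame (\<lambda>\<omega>. f \<omega> + (-1) * g \<omega>)" by (intro tame_add tame_scale assms)
  then show ?thesis by simp
qed

lemma tame_cnj: assumes "tame f" shows "tame (\<lambda>\<omega>. cnj (f \<omega>))"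
proof -
  obtain C N where 1: "0 \<le> C" "\<And>\<omega>. cmod (f \<omega>) \<le> C * (1 + Sm \<omega>) ^ N"
    using assms by (auto simp: tame_def)
  have m: "(\<lambda>\<omega>. cnj (f \<omega>)) \<in> borel_measurable M"
    using assms by (intro borel_measurable_continuous_on[where f=cnj]) (auto simp: tame_def intro: continuous_on_cnj[OF continuous_on_id])
  show ?thesis by (rule tameI[OF m 1(1)]) (use 1 in auto)
qed

lemma tame_X: "tame (\<lambda>\<omega>. complex_of_real (X i \<omega>))"
proof (rule tameI[where C=1 and N=1])
  fix \<omega> show "cmod (complex_of_real (X i \<omega>)) \<le> 1 * (1 + Sm \<omega>) ^ 1"
    using X_le_Sm[of i \<omega>] by simp
qed auto

lemma tame_sum: "finite K \<Longrightarrow> (\<And>k. k \<in> K \<Longrightarrow> tame (f k)) \<Longrightarrow> tame (\<lambda>\<omega>. \<Sum>k\<in>K. f k \<omega>)"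
proof (induction K rule: finite_induct)
  case empty then show ?case using tame_const[of 0] by simp
next
  case (insert a K)
  then show ?case by (simp add: tame_add)
qed

lemma tame_mono: "tame (\<lambda>\<omega>. complex_of_real (monomialRV X k \<omega>))"
proof (rule tameI[where C=1 and N="sum k UNIV"])
  show "(\<lambda>\<omega>. complex_of_real (monomialRV X k \<omega>)) \<in> borel_measurable M"
    unfolding monomialRV_def by measurable
  fix \<omega>
  have "\<bar>monomialRV X k \<omega>\<bar> = (\<Prod>i\<in>UNIV. \<bar>X i \<omega>\<bar> ^ k i)"
    unfolding monomialRV_def by (simp add: abs_prod power_abs)
  also have "\<dots> \<le> (\<Prod>i\<in>UNIV. (1 + Sm \<omega>) ^ k i)"
  proof (intro prod_mono conjI power_mono)
    fix i show "\<bar>X i \<omega>\<bar> \<le> 1 + Sm \<omega>" using X_le_Sm[of i \<omega>] by simp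
  qed auto
  also have "\<dots> = (1 + Sm \<omega>) ^ sum k UNIV" by (simp add: power_sum)
  finally show "cmod (complex_of_real (monomialRV X k \<omega>)) \<le> 1 * (1 + Sm \<omega>) ^ sum k UNIV" by simp
qed auto

lemma L2inner_add_right:
  assumes "tame f" "tame g1" "tame g2"
  shows "L2inner M f (\<lambda>\<omega>. g1 \<omega> + g2 \<omega>) = L2inner M f g1 + L2inner M f g2"
proof -
  have i1: "integrable M (\<lambda>\<omega>. f \<omega> * cnj (g1 \<omega>))" by (intro tame_integrable tame_mult tame_cnj assms)
  have i2: "integrable M (\<lambda>\<omega>. f \<omega> * cnj (g2 \<omega>))" by (intro tame_integrable tame_mult tame_cnj assms)
  show ?thesis unfolding L2inner_def using Bochner_Integration.integral_add[OF i1 i2] by (simp add: algebra_simps)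
qed

lemma L2inner_diff_left:
  assumes "tame f1" "tame f2" "tame g"
  shows "L2inner M (\<lambda>\<omega>. f1 \<omega> - f2 \<omega>) g = L2inner M f1 g - L2inner M f2 g"
proof -
  have i1: "integrable M (\<lambda>\<omega>. f1 \<omega> * cnj (g \<omega>))" by (intro tame_integrable tame_mult tame_cnj assms)
  have i2: "integrable M (\<lambda>\<omega>. f2 \<omega> * cnj (g \<omega>))" by (intro tame_integrable tame_mult tame_cnj assms)
  show ?thesis unfolding L2inner_def using Bochner_Integration.integral_diff[OF i1 i2] by (simp add: algebra_simps)
qed

lemma L2inner_scale_left: "L2inner M (\<lambda>\<omega>. c * f \<omega>) g = c * L2inner M f g"
  unfolding L2inner_def by (simp add: mult.assoc)

lemma L2inner_sum_right:
  assumes "tame f" "finite K" "\<And>k. k \<in> K \<Longrightarrow> tame (b k)"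
  shows "L2inner M f (\<lambda>\<omega>. \<Sum>k\<in>K. c k * b k \<omega>) = (\<Sum>k\<in>K. cnj (c k) * L2inner M f (b k))"
proof -
  have "L2inner M f (\<lambda>\<omega>. \<Sum>k\<in>K. c k * b k \<omega>) = integral\<^sup>L M (\<lambda>\<omega>. \<Sum>k\<in>K. cnj (c k) * (f \<omega> * cnj (b k \<omega>)))"
    unfolding L2inner_def by (simp add: sum_distrib_left algebra_simps)
  also have "\<dots> = (\<Sum>k\<in>K. integral\<^sup>L M (\<lambda>\<omega>. cnj (c k) * (f \<omega> * cnj (b k \<omega>))))"
    by (rule Bochner_Integration.integral_sum) (intro integrable_mult_right tame_integrable tame_mult tame_cnj assms; simp)
  also have "\<dots> = (\<Sum>k\<in>K. cnj (c k) * L2inner M f (b k))"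
    unfolding L2inner_def by simp
  finally show ?thesis .
qed

definition spanF :: "'k set \<Rightarrow> ('k \<Rightarrow> 'a \<Rightarrow> complex) \<Rightarrow> ('a \<Rightarrow> complex) set" where
  "spanF K b = {f. \<exists>c. f = (\<lambda>\<omega>. \<Sum>k\<in>K. c k * b k \<omega>)}"

lemma spanF_tame: "finite K \<Longrightarrow> (\<And>k. k \<in> K \<Longrightarrow> tame (b k)) \<Longrightarrow> p \<in> spanF K b \<Longrightarrow> tame p"
  unfolding spanF_def by (auto intro!: tame_sum tame_scale)

lemma orth_span:
  assumes "tame f" "finite K" "\<And>k. k \<in> K \<Longrightarrow> tame (b k)" "\<forall>k\<in>K. L2inner M f (b k) = 0"
    "g \<in> spanF K b"
  shows "L2inner M f g = 0"
proof -
  obtain c where c: "g = (\<lambda>\<omega>. \<Sum>k\<in>K. c k * b k \<omega>)" using assms(5) by (auto simp: spanF_def)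
  show ?thesis unfolding c using assms by (simp add: L2inner_sum_right)
qed

lemma null_orth:
  assumes "tame f" "tame r" "L2inner M r r = 0"
  shows "L2inner M f r = 0"
proof -
  have ir: "integrable M (\<lambda>\<omega>. cmod (r \<omega>) ^ 2)"
  proof -
    have "integrable M (\<lambda>\<omega>. norm (r \<omega> * r \<omega>))" by (intro integrable_norm tame_integrable tame_mult assms)
    then show ?thesis by (simp add: norm_mult power2_eq_square)
  qed
  have "L2inner M r r = complex_of_real (integral\<^sup>L M (\<lambda>\<omega>. cmod (r \<omega>) ^ 2))"
    unfolding L2inner_def by (simp add: complex_norm_square[symmetric] del: of_real_power)
  with assms(3) have "integral\<^sup>L M (\<lambda>\<omega>. cmod (r \<omega>) ^ 2) = 0" by simp
  with integral_nonneg_eq_0_iff_AE[OF ir] have "AE \<omega> in M. cmod (r \<omega>) ^ 2 = 0" by simp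
  then have "AE \<omega> in M. f \<omega> * cnj (r \<omega>) = 0" by (auto elim!: AE_mp)
  then have "integral\<^sup>L M (\<lambda>\<omega>. f \<omega> * cnj (r \<omega>)) = integral\<^sup>L M (\<lambda>\<omega>. 0)"
    by (intro integral_cong_AE) (auto intro!: tame_meas tame_mult tame_cnj assms)
  then show ?thesis unfolding L2inner_def by simp
qed

end

context mx begin

lemma b_in_span: "finite K \<Longrightarrow> k \<in> K \<Longrightarrow> b k \<in> spanF K b"
  unfolding spanF_def
  by (rule CollectI, rule exI[of _ "\<lambda>j. if j = k then 1 else 0"])
     (simp add: if_distrib[of "\<lambda>x. x * _"] cong: if_cong)

lemma proj_exists_span:
  assumes "finite K" "\<And>k. k \<in> K \<Longrightarrow> tame (b k)" "tame h"
  shows "\<exists>p\<in>spanF K b. \<forall>k\<in>K. L2inner M (\<lambda>\<omega>. h \<omega> - p \<omega>) (b k) = 0"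
  using assms
proof (induction K arbitrary: h rule: finite_induct)
  case empty
  show ?case by (auto simp: spanF_def)
next
  case (insert a K)
  have bK: "\<And>k. k \<in> K \<Longrightarrow> tame (b k)" using insert by auto
  have ba: "tame (b a)" using insert by auto
  obtain p' where p': "p' \<in> spanF K b" "\<forall>k\<in>K. L2inner M (\<lambda>\<omega>. h \<omega> - p' \<omega>) (b k) = 0"
    using insert.IH[OF bK insert.prems(2)] by blast
  obtain q where q: "q \<in> spanF K b" "\<forall>k\<in>K. L2inner M (\<lambda>\<omega>. b a \<omega> - q \<omega>) (b k) = 0"
    using insert.IH[OF bK ba] by blast
  define r where "r = (\<lambda>\<omega>. b a \<omega> - q \<omega>)"
  obtain c' where c': "p' = (\<lambda>\<omega>. \<Sum>k\<in>K. c' k * b k \<omega>)" using p'(1) by (auto simp: spanF_def)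
  obtain c'' where c'': "q = (\<lambda>\<omega>. \<Sum>k\<in>K. c'' k * b k \<omega>)" using q(1) by (auto simp: spanF_def)
  have tp': "tame p'" by (rule spanF_tame[OF insert(1) bK p'(1)])
  have tq: "tame q" by (rule spanF_tame[OF insert(1) bK q(1)])
  have tr: "tame r" unfolding r_def by (intro tame_diff ba tq)
  have th: "tame h" by (rule insert.prems(2))
  have thp: "tame (\<lambda>\<omega>. h \<omega> - p' \<omega>)" by (intro tame_diff th tp')
  have ba_eq: "b a = (\<lambda>\<omega>. r \<omega> + q \<omega>)" unfolding r_def by simp
  have qorth: "L2inner M u q = 0" if "\<forall>k\<in>K. L2inner M u (b k) = 0" "tame u" for u
    by (rule orth_span[OF that(2) insert(1) bK that(1) q(1)])
  have rorth: "\<forall>k\<in>K. L2inner M r (b k) = 0" using q(2) unfolding r_def by simp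
  show ?case
  proof (cases "L2inner M r r = 0")
    case True
    show ?thesis
    proof (intro bexI[of _ p'] ballI)
      show "p' \<in> spanF (insert a K) b"
      proof -
        have e: "(\<Sum>k\<in>insert a K. (c'(a:=0)) k * b k \<omega>) = (\<Sum>k\<in>K. c' k * b k \<omega>)" for \<omega>
        proof -
          have "(\<Sum>k\<in>insert a K. (c'(a:=0)) k * b k \<omega>) = (c'(a:=0)) a * b a \<omega> + (\<Sum>k\<in>K. (c'(a:=0)) k * b k \<omega>)"
            by (rule sum.insert[OF insert(1,2)])
          also have "(\<Sum>k\<in>K. (c'(a:=0)) k * b k \<omega>) = (\<Sum>k\<in>K. c' k * b k \<omega>)"
            using insert(2) by (intro sum.cong) auto
          finally show ?thesis by simp
        qed
        show ?thesis unfolding spanF_def c' using e by (intro CollectI exI[of _ "c'(a:=0)"]) (simp add: fun_eq_iff)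
      qed
      fix k assume "k \<in> insert a K"
      then show "L2inner M (\<lambda>\<omega>. h \<omega> - p' \<omega>) (b k) = 0"
      proof
        assume "k = a"
        have "L2inner M (\<lambda>\<omega>. h \<omega> - p' \<omega>) (b a) =
              L2inner M (\<lambda>\<omega>. h \<omega> - p' \<omega>) r + L2inner M (\<lambda>\<omega>. h \<omega> - p' \<omega>) q"
          unfolding ba_eq by (rule L2inner_add_right[OF thp tr tq])
        also have "\<dots> = 0" using null_orth[OF thp tr True] qorth[OF p'(2) thp] by simp
        finally show ?thesis using \<open>k = a\<close> by simp
      next
        assume "k \<in> K" then show ?thesis using p'(2) by blast
      qed
    qed
  next
    case False
    define lam where "lam = L2inner M (\<lambda>\<omega>. h \<omega> - p' \<omega>) r / L2inner M r r"
    define p where "p = (\<lambda>\<omega>. p' \<omega> + lam * r \<omega>)"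
    have hp: "(\<lambda>\<omega>. h \<omega> - p \<omega>) = (\<lambda>\<omega>. (h \<omega> - p' \<omega>) - lam * r \<omega>)"
      unfolding p_def by (simp add: algebra_simps)
    have tlr: "tame (\<lambda>\<omega>. lam * r \<omega>)" by (intro tame_scale tr)
    have thp2: "tame (\<lambda>\<omega>. h \<omega> - p \<omega>)" unfolding hp by (intro tame_diff thp tlr)
    have orthK: "\<forall>k\<in>K. L2inner M (\<lambda>\<omega>. h \<omega> - p \<omega>) (b k) = 0"
    proof
      fix k assume k: "k \<in> K"
      have "L2inner M (\<lambda>\<omega>. h \<omega> - p \<omega>) (b k) =
            L2inner M (\<lambda>\<omega>. h \<omega> - p' \<omega>) (b k) - lam * L2inner M r (b k)"
        unfolding hp by (simp add: L2inner_diff_left[OF thp tlr bK[OF k]] L2inner_scale_left)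
      then show "L2inner M (\<lambda>\<omega>. h \<omega> - p \<omega>) (b k) = 0" using p'(2) rorth k by simp
    qed
    show ?thesis
    proof (intro bexI[of _ p] ballI)
      show "p \<in> spanF (insert a K) b"
      proof -
        have "p = (\<lambda>\<omega>. \<Sum>k\<in>insert a K. (\<lambda>k. if k = a then lam else c' k - lam * c'' k) k * b k \<omega>)"
        proof
          fix \<omega>
          have "(\<Sum>k\<in>insert a K. (\<lambda>k. if k = a then lam else c' k - lam * c'' k) k * b k \<omega>)
              = lam * b a \<omega> + (\<Sum>k\<in>K. (c' k - lam * c'' k) * b k \<omega>)"
            using insert(1,2) by (auto intro!: sum.cong)
          also have "\<dots> = p \<omega>"
            unfolding p_def r_def c' c''
            by (simp add: algebra_simps sum_subtractf sum_distrib_left)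
          finally show "p \<omega> = (\<Sum>k\<in>insert a K. (\<lambda>k. if k = a then lam else c' k - lam * c'' k) k * b k \<omega>)" by simp
        qed
        then show ?thesis unfolding spanF_def by (intro CollectI exI[of _ "\<lambda>k. if k = a then lam else c' k - lam * c'' k"])
      qed
      fix k assume "k \<in> insert a K"
      then show "L2inner M (\<lambda>\<omega>. h \<omega> - p \<omega>) (b k) = 0"
      proof
        assume "k = a"
        have "L2inner M (\<lambda>\<omega>. h \<omega> - p \<omega>) (b a) =
              L2inner M (\<lambda>\<omega>. h \<omega> - p \<omega>) r + L2inner M (\<lambda>\<omega>. h \<omega> - p \<omega>) q"
          unfolding ba_eq by (rule L2inner_add_right[OF thp2 tr tq])
        also have "L2inner M (\<lambda>\<omega>. h \<omega> - p \<omega>) q = 0" by (rule qorth[OF orthK thp2])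
        also have "L2inner M (\<lambda>\<omega>. h \<omega> - p \<omega>) r = L2inner M (\<lambda>\<omega>. h \<omega> - p' \<omega>) r - lam * L2inner M r r"
          unfolding hp by (simp add: L2inner_diff_left[OF thp tlr tr] L2inner_scale_left)
        also have "\<dots> = 0" unfolding lam_def using False by simp
        finally show ?thesis using \<open>k = a\<close> by simp
      next
        assume "k \<in> K" then show ?thesis using orthK by blast
      qed
    qed
  qed
qed

end

context mx begin

definition Kn :: "nat \<Rightarrow> ('d \<Rightarrow> nat) set" where "Kn n = {k. sum k UNIV \<le> n}"
definition bm :: "('d \<Rightarrow> nat) \<Rightarrow> 'a \<Rightarrow> complex" where "bm k \<omega> = complex_of_real (monomialRV X k \<omega>)"

lemma finite_Kn: "finite (Kn n)"
proof (rule finite_subset)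
  show "Kn n \<subseteq> PiE UNIV (\<lambda>_. {..n})"
  proof
    fix k assume "k \<in> Kn n"
    then have "k i \<le> n" for i
      using member_le_sum[of i UNIV k] unfolding Kn_def by auto
    then show "k \<in> PiE UNIV (\<lambda>_. {..n})" by (auto simp: PiE_def extensional_def)
  qed
  show "finite (PiE (UNIV::'d set) (\<lambda>_. {..n::nat}))" by (rule finite_PiE) auto
qed

lemma bm_tame: "tame (bm k)"
  unfolding bm_def using tame_mono .

lemma poly_eq_span: "polyRV_deg X n = spanF (Kn n) bm"
proof
  show "spanF (Kn n) bm \<subseteq> polyRV_deg X n"
    unfolding spanF_def polyRV_deg_def bm_def using finite_Kn by (auto simp: Kn_def)
  show "polyRV_deg X n \<subseteq> spanF (Kn n) bm"
  proof
    fix f assume "f \<in> polyRV_deg X n"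
    then obtain K c where K: "finite K" "\<forall>k\<in>K. sum k UNIV \<le> n"
      and f: "f = (\<lambda>\<omega>. \<Sum>k\<in>K. c k * complex_of_real (monomialRV X k \<omega>))"
      unfolding polyRV_deg_def by blast
    have sub: "K \<subseteq> Kn n" using K by (auto simp: Kn_def)
    have "f = (\<lambda>\<omega>. \<Sum>k\<in>Kn n. (\<lambda>k. if k \<in> K then c k else 0) k * bm k \<omega>)"
    proof
      fix \<omega>
      have "(\<Sum>k\<in>Kn n. (\<lambda>k. if k \<in> K then c k else 0) k * bm k \<omega>) = (\<Sum>k\<in>K. (\<lambda>k. if k \<in> K then c k else 0) k * bm k \<omega>)"
        by (rule sum.mono_neutral_right[OF finite_Kn sub]) auto
      also have "\<dots> = f \<omega>" unfolding f bm_def by (auto intro!: sum.cong)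
      finally show "f \<omega> = (\<Sum>k\<in>Kn n. (\<lambda>k. if k \<in> K then c k else 0) k * bm k \<omega>)" by simp
    qed
    then show "f \<in> spanF (Kn n) bm" unfolding spanF_def
      by (intro CollectI exI[of _ "\<lambda>k. if k \<in> K then c k else 0"])
  qed
qed

lemma poly_tame: "f \<in> polyRV_deg X n \<Longrightarrow> tame f"
  unfolding poly_eq_span using spanF_tame[of "Kn n" bm f] finite_Kn bm_tame by blast

lemma proj_exists_poly:
  assumes "tame h"
  shows "\<exists>p\<in>polyRV_deg X n. \<forall>g\<in>polyRV_deg X n. L2inner M (\<lambda>\<omega>. h \<omega> - p \<omega>) g = 0"
proof -
  obtain p where p: "p \<in> spanF (Kn n) bm" "\<forall>k\<in>Kn n. L2inner M (\<lambda>\<omega>. h \<omega> - p \<omega>) (bm k) = 0"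
    using proj_exists_span[of "Kn n" bm h] finite_Kn bm_tame assms by blast
  have tp: "tame p" using spanF_tame[of "Kn n" bm p] finite_Kn bm_tame p(1) by blast
  have "\<forall>g\<in>spanF (Kn n) bm. L2inner M (\<lambda>\<omega>. h \<omega> - p \<omega>) g = 0"
    using orth_span[of "\<lambda>\<omega>. h \<omega> - p \<omega>" "Kn n" bm] tame_diff[OF assms tp] finite_Kn bm_tame p(2) by blast
  then show ?thesis using p(1) unfolding poly_eq_span by blast
qed

definition Pn :: "nat \<Rightarrow> ('a \<Rightarrow> complex) \<Rightarrow> 'a \<Rightarrow> complex" where
  "Pn n h = L2proj M (polyRV_deg X n) h"

lemma Pn_spec:
  assumes "tame h"
  shows "Pn n h \<in> polyRV_deg X n \<and> (\<forall>g\<in>polyRV_deg X n. L2inner M (\<lambda>\<omega>. h \<omega> - Pn n h \<omega>) g = 0)"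
  using someI_ex[OF proj_exists_poly[OF assms, of n, unfolded Bex_def]] unfolding Pn_def L2proj_def .

lemma Pn_tame: "tame h \<Longrightarrow> tame (Pn n h)"
  using Pn_spec poly_tame by blast

lemma mono_single: "monomialRV X (\<lambda>j. if j = i then m else 0) \<omega> = X i \<omega> ^ m"
proof -
  have "\<And>j. X j \<omega> ^ (if j = i then m else 0) = (if j = i then X i \<omega> ^ m else 1)" by auto
  then show ?thesis unfolding monomialRV_def by (simp add: prod.delta)
qed

lemma Xpow_in: "m \<le> n \<Longrightarrow> (\<lambda>\<omega>. complex_of_real (X i \<omega> ^ m)) \<in> polyRV_deg X n"
proof -
  assume mn: "m \<le> n"
  let ?k = "\<lambda>j. if j = i then m else (0::nat)"
  have s: "sum ?k UNIV = m" by (simp add: sum.delta)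
  show ?thesis unfolding polyRV_deg_def
    by (rule CollectI, rule exI[of _ "{?k}"], rule exI[of _ "\<lambda>_. 1"]) (use s mn in \<open>simp add: mono_single\<close>)
qed

lemma one_in: "(\<lambda>\<omega>. 1) \<in> polyRV_deg X n"
  using Xpow_in[of 0 n] by simp

lemma X_in: "1 \<le> n \<Longrightarrow> (\<lambda>\<omega>. complex_of_real (X i \<omega>)) \<in> polyRV_deg X n"
  using Xpow_in[of 1 n] by simp

lemma deg0_const: "f \<in> polyRV_deg X 0 \<Longrightarrow> \<exists>c. f = (\<lambda>\<omega>. c)"
proof -
  assume "f \<in> polyRV_deg X 0"
  then obtain K c where K: "finite K" "\<forall>k\<in>K. sum k UNIV \<le> 0"
      and f: "f = (\<lambda>\<omega>. \<Sum>k\<in>K. c k * complex_of_real (monomialRV X k \<omega>))"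
      unfolding polyRV_deg_def by blast
  have "k \<in> K \<Longrightarrow> monomialRV X k \<omega> = 1" for k \<omega>
    using K(2) unfolding monomialRV_def by auto
  then have "f = (\<lambda>\<omega>. \<Sum>k\<in>K. c k)" unfolding f by (auto intro!: sum.cong)
  then show ?thesis by blast
qed

lemma E_Pn: assumes "tame h" shows "integral\<^sup>L M (Pn n h) = integral\<^sup>L M h"
proof -
  have "L2inner M (\<lambda>\<omega>. h \<omega> - Pn n h \<omega>) (\<lambda>\<omega>. 1) = 0" using Pn_spec[OF assms] one_in by blast
  then have "integral\<^sup>L M (\<lambda>\<omega>. h \<omega> - Pn n h \<omega>) = 0" unfolding L2inner_def by simp
  moreover have "integral\<^sup>L M (\<lambda>\<omega>. h \<omega> - Pn n h \<omega>) = integral\<^sup>L M h - integral\<^sup>L M (Pn n h)"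
    by (rule Bochner_Integration.integral_diff) (auto intro!: tame_integrable Pn_tame assms)
  ultimately show ?thesis by simp
qed

lemma P0_eq: assumes "tame h" shows "Pn 0 h = (\<lambda>\<omega>. integral\<^sup>L M h)"
proof -
  obtain c where c: "Pn 0 h = (\<lambda>\<omega>. c)" using deg0_const Pn_spec[OF assms] by blast
  have "integral\<^sup>L M (Pn 0 h) = c" unfolding c by (simp add: prob_space)
  with E_Pn[OF assms, of 0] c show ?thesis by simp
qed

lemma E_X_P1:
  assumes "tame h"
  shows "integral\<^sup>L M (\<lambda>\<omega>. complex_of_real (X i \<omega>) * Pn 1 h \<omega>) = integral\<^sup>L M (\<lambda>\<omega>. complex_of_real (X i \<omega>) * h \<omega>)"
proof -
  have "L2inner M (\<lambda>\<omega>. h \<omega> - Pn 1 h \<omega>) (\<lambda>\<omega>. complex_of_real (X i \<omega>)) = 0"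
    using Pn_spec[OF assms] X_in[of 1] by blast
  then have z: "integral\<^sup>L M (\<lambda>\<omega>. complex_of_real (X i \<omega>) * h \<omega> - complex_of_real (X i \<omega>) * Pn 1 h \<omega>) = 0"
    unfolding L2inner_def by (simp add: algebra_simps)
  have "integral\<^sup>L M (\<lambda>\<omega>. complex_of_real (X i \<omega>) * h \<omega> - complex_of_real (X i \<omega>) * Pn 1 h \<omega>)
     = integral\<^sup>L M (\<lambda>\<omega>. complex_of_real (X i \<omega>) * h \<omega>) - integral\<^sup>L M (\<lambda>\<omega>. complex_of_real (X i \<omega>) * Pn 1 h \<omega>)"
    by (rule Bochner_Integration.integral_diff) (auto intro!: tame_integrable Pn_tame assms tame_mult tame_X)
  with z show ?thesis by simp
qed

lemma Gcomp_Pn: "Gcomp M X 0 h = Pn 0 h" "Gcomp M X (Suc n) h = (\<lambda>\<omega>. Pn (Suc n) h \<omega> - Pn n h \<omega>)"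
  by (simp_all add: Pn_def)

lemma Gcomp_tame: "tame h \<Longrightarrow> tame (Gcomp M X n h)"
proof (cases n)
  case 0 assume "tame h" then show ?thesis unfolding 0 Gcomp_Pn by (rule Pn_tame)
next
  case (Suc m) assume "tame h" then show ?thesis unfolding Suc Gcomp_Pn by (intro tame_diff Pn_tame)
qed

lemma E_Gcomp0: "tame h \<Longrightarrow> integral\<^sup>L M (Gcomp M X 0 h) = integral\<^sup>L M h"
  unfolding Gcomp_Pn by (rule E_Pn)

lemma E_GcompS: assumes "tame h" shows "integral\<^sup>L M (Gcomp M X (Suc n) h) = 0"
proof -
  have "integral\<^sup>L M (Gcomp M X (Suc n) h) = integral\<^sup>L M (Pn (Suc n) h) - integral\<^sup>L M (Pn n h)"
    unfolding Gcomp_Pn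
    by (rule Bochner_Integration.integral_diff) (auto intro!: tame_integrable Pn_tame assms)
  then show ?thesis using E_Pn[OF assms] by simp
qed

end

declare Gcomp.simps[simp del]

context mx begin

definition mc :: "'d \<Rightarrow> complex" where "mc i = integral\<^sup>L M (\<lambda>\<omega>. complex_of_real (X i \<omega>))"

lemma tame_mulX: "tame f \<Longrightarrow> tame (mulX X i f)"
  unfolding mulX_def by (intro tame_mult tame_X)

lemma deg_in: "p \<in> polyRV X \<Longrightarrow> p \<in> polyRV_deg X (degRV X p)"
  unfolding degRV_def polyRV_def by (rule LeastI_ex) blast

lemma polyRV_tame: "p \<in> polyRV X \<Longrightarrow> tame p"
  using deg_in poly_tame by blast

lemma Uop_tame: assumes "tame p" shows "tame (Uop M X i p)"
proof -
  have a: "tame (annihOp M X i p)" unfolding annihOp_def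
    by (intro tame_sum finite_atLeastAtMost Gcomp_tame tame_mulX assms)
  have b: "tame (preservOp M X i p)" unfolding preservOp_def
    by (intro tame_sum finite_atLeastAtMost Gcomp_tame tame_mulX assms)
  have "tame (\<lambda>\<omega>. annihOp M X i p \<omega> + 1/2 * preservOp M X i p \<omega>)" by (intro tame_add tame_scale a b)
  then show ?thesis unfolding Uop_def .
qed

lemma sum_first:
  fixes F :: "nat \<Rightarrow> complex"
  assumes "\<And>n. n > a \<Longrightarrow> F n = 0"
  shows "(\<Sum>n\<in>{a..D}. F n) = (if a \<le> D then F a else 0)"
proof (cases "a \<le> D")
  case True
  have "{a..D} = insert a {Suc a..D}" using True by auto
  then have "(\<Sum>n\<in>{a..D}. F n) = F a + (\<Sum>n\<in>{Suc a..D}. F n)" by simp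
  also have "(\<Sum>n\<in>{Suc a..D}. F n) = 0" using assms by (intro sum.neutral) auto
  finally show ?thesis using True by simp
qed simp

lemma E_Uop:
  assumes p: "p \<in> polyRV X"
  shows "integral\<^sup>L M (Uop M X i p) =
     integral\<^sup>L M (\<lambda>\<omega>. complex_of_real (X i \<omega>) * p \<omega>) - mc i / 2 * integral\<^sup>L M p"
proof -
  define D where "D = degRV X p"
  have pD: "p \<in> polyRV_deg X D" unfolding D_def by (rule deg_in[OF p])
  have tp: "tame p" by (rule poly_tame[OF pD])
  have tG: "tame (Gcomp M X n p)" for n by (rule Gcomp_tame[OF tp])
  have tGG: "tame (Gcomp M X m (mulX X i (Gcomp M X n p)))" for m n by (intro Gcomp_tame tame_mulX tG)
  have EA: "integral\<^sup>L M (annihOp M X i p) = (\<Sum>n\<in>{1..D}. integral\<^sup>L M (Gcomp M X (n - 1) (mulX X i (Gcomp M X n p))))"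
    unfolding annihOp_def D_def
    by (rule Bochner_Integration.integral_sum) (intro tame_integrable tGG)
  have EP: "integral\<^sup>L M (preservOp M X i p) = (\<Sum>n\<in>{0..D}. integral\<^sup>L M (Gcomp M X n (mulX X i (Gcomp M X n p))))"
    unfolding preservOp_def D_def
    by (rule Bochner_Integration.integral_sum) (intro tame_integrable tGG)
  have EA2: "integral\<^sup>L M (annihOp M X i p) = (if 1 \<le> D then integral\<^sup>L M (mulX X i (Gcomp M X 1 p)) else 0)"
  proof -
    have "(\<Sum>n\<in>{1..D}. integral\<^sup>L M (Gcomp M X (n - 1) (mulX X i (Gcomp M X n p)))) =
          (if 1 \<le> D then integral\<^sup>L M (Gcomp M X (1 - 1) (mulX X i (Gcomp M X 1 p))) else 0)"
    proof (rule sum_first)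
      fix n :: nat assume "n > 1"
      then have "n - 1 = Suc (n - 2)" by simp
      then show "integral\<^sup>L M (Gcomp M X (n - 1) (mulX X i (Gcomp M X n p))) = 0"
        using E_GcompS[OF tame_mulX[OF tG]] by simp
    qed
    then show ?thesis using EA E_Gcomp0[OF tame_mulX[OF tG]] by simp
  qed
  have EP2: "integral\<^sup>L M (preservOp M X i p) = integral\<^sup>L M (mulX X i (Gcomp M X 0 p))"
  proof -
    have "(\<Sum>n\<in>{0..D}. integral\<^sup>L M (Gcomp M X n (mulX X i (Gcomp M X n p)))) =
          (if 0 \<le> D then integral\<^sup>L M (Gcomp M X 0 (mulX X i (Gcomp M X 0 p))) else 0)"
    proof (rule sum_first)
      fix n :: nat assume "n > 0"
      then obtain m where "n = Suc m" by (cases n) auto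
      then show "integral\<^sup>L M (Gcomp M X n (mulX X i (Gcomp M X n p))) = 0"
        using E_GcompS[OF tame_mulX[OF tG]] by simp
    qed
    then show ?thesis using EP E_Gcomp0[OF tame_mulX[OF tG]] by simp
  qed
  have G0: "Gcomp M X 0 p = (\<lambda>\<omega>. integral\<^sup>L M p)" unfolding Gcomp_Pn by (rule P0_eq[OF tp])
  have EXG0: "integral\<^sup>L M (mulX X i (Gcomp M X 0 p)) = mc i * integral\<^sup>L M p"
    unfolding G0 mulX_def mc_def by simp
  have EU: "integral\<^sup>L M (Uop M X i p) = integral\<^sup>L M (annihOp M X i p) + 1/2 * integral\<^sup>L M (preservOp M X i p)"
  proof -
    have ta: "tame (annihOp M X i p)" unfolding annihOp_def
      by (intro tame_sum finite_atLeastAtMost Gcomp_tame tame_mulX tp)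
    have tb: "tame (preservOp M X i p)" unfolding preservOp_def
      by (intro tame_sum finite_atLeastAtMost Gcomp_tame tame_mulX tp)
    have "integral\<^sup>L M (\<lambda>\<omega>. annihOp M X i p \<omega> + 1/2 * preservOp M X i p \<omega>) =
          integral\<^sup>L M (annihOp M X i p) + integral\<^sup>L M (\<lambda>\<omega>. 1/2 * preservOp M X i p \<omega>)"
      by (rule Bochner_Integration.integral_add) (intro tame_integrable ta tame_scale tb)+
    then show ?thesis unfolding Uop_def by simp
  qed
  show ?thesis
  proof (cases "1 \<le> D")
    case True
    have G1: "Gcomp M X 1 p = (\<lambda>\<omega>. Pn 1 p \<omega> - integral\<^sup>L M p)"
      using Gcomp_Pn(2)[of 0 p] P0_eq[OF tp] by simp
    have "integral\<^sup>L M (mulX X i (Gcomp M X 1 p)) =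
          integral\<^sup>L M (\<lambda>\<omega>. complex_of_real (X i \<omega>) * Pn 1 p \<omega>) - integral\<^sup>L M (\<lambda>\<omega>. complex_of_real (X i \<omega>) * integral\<^sup>L M p)"
      unfolding G1 mulX_def right_diff_distrib
      by (rule Bochner_Integration.integral_diff) (auto intro!: tame_integrable tame_mult tame_X Pn_tame tp tame_const)
    also have "\<dots> = integral\<^sup>L M (\<lambda>\<omega>. complex_of_real (X i \<omega>) * p \<omega>) - mc i * integral\<^sup>L M p"
      unfolding E_X_P1[OF tp] mc_def by simp
    finally have H: "integral\<^sup>L M (mulX X i (Gcomp M X 1 p)) = integral\<^sup>L M (\<lambda>\<omega>. complex_of_real (X i \<omega>) * p \<omega>) - mc i * integral\<^sup>L M p" .
    have "integral\<^sup>L M (Uop M X i p) = integral\<^sup>L M (mulX X i (Gcomp M X 1 p)) + 1/2 * (mc i * integral\<^sup>L M p)"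
      using EU EA2 EP2 EXG0 True by simp
    also have "\<dots> = integral\<^sup>L M (\<lambda>\<omega>. complex_of_real (X i \<omega>) * p \<omega>) - mc i * integral\<^sup>L M p + 1/2 * (mc i * integral\<^sup>L M p)"
      unfolding H ..
    also have "\<dots> = integral\<^sup>L M (\<lambda>\<omega>. complex_of_real (X i \<omega>) * p \<omega>) - mc i / 2 * integral\<^sup>L M p"
      by (simp add: field_simps)
    finally show ?thesis .
  next
    case False
    then have "D = 0" by simp
    then obtain c where c: "p = (\<lambda>\<omega>. c)" using pD deg0_const by blast
    have "integral\<^sup>L M (\<lambda>\<omega>. complex_of_real (X i \<omega>) * p \<omega>) = mc i * c" unfolding c mc_def by simp
    moreover have "integral\<^sup>L M p = c" unfolding c by (simp add: prob_space)
    ultimately show ?thesis using False EU EA2 EP2 EXG0 by (simp add: field_simps)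
  qed
qed

lemma Uop_one: "Uop M X i (\<lambda>\<omega>. 1) = (\<lambda>\<omega>. mc i / 2)"
proof -
  have d: "degRV X (\<lambda>\<omega>. 1) = 0" unfolding degRV_def using one_in[of 0] by (simp add: Least_eq_0)
  have G0: "Gcomp M X 0 (\<lambda>\<omega>. 1) = (\<lambda>\<omega>. 1)"
    unfolding Gcomp_Pn by (subst P0_eq[OF tame_const]) (simp add: prob_space)
  have G0X: "Gcomp M X 0 (mulX X i (\<lambda>\<omega>. 1)) = (\<lambda>\<omega>. mc i)"
    unfolding Gcomp_Pn mulX_def mc_def by (subst P0_eq) (auto intro: tame_X)
  show ?thesis by (simp add: Uop_def annihOp_def preservOp_def d G0 G0X del: Gcomp.simps)
qed

end

locale mxc = mx M X for M :: "'a measure" and X :: "'d::finite \<Rightarrow> 'a \<Rightarrow> real" +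
  fixes \<alpha> :: "'d \<Rightarrow> 'd \<Rightarrow> 'd \<Rightarrow> real" and \<beta> :: "'d \<Rightarrow> 'd \<Rightarrow> real"
  assumes comm: "\<forall>i j. \<forall>f\<in>polyRV X.
        AE \<omega> in M. Uop M X i (mulX X j f) \<omega> - complex_of_real (X j \<omega>) * Uop M X i f \<omega>
          = (\<Sum>k\<in>UNIV. complex_of_real (\<alpha> i j k) * complex_of_real (X k \<omega>) * f \<omega>)
            + complex_of_real (\<beta> i j) * f \<omega>"
begin

definition LL :: "'d \<Rightarrow> 'a \<Rightarrow> real" where "LL i \<omega> = (\<Sum>k\<in>UNIV. \<alpha> i i k * X k \<omega>) + \<beta> i i"

lemma LL_meas[measurable]: "LL i \<in> borel_measurable M" unfolding LL_def by measurable

lemma Xpow_poly: "(\<lambda>\<omega>. complex_of_real (X i \<omega> ^ n)) \<in> polyRV X"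
  unfolding polyRV_def using Xpow_in[of n n i] by blast

lemma alg_step: "(x::complex) * (of_nat n * L * x ^ (n - 1) + c * x ^ n) + L * x ^ n
   = of_nat (Suc n) * L * x ^ (Suc n - 1) + c * x ^ Suc n"
  by (cases n) (simp_all add: algebra_simps)

lemma U_pow: "AE \<omega> in M. Uop M X i (\<lambda>\<omega>. complex_of_real (X i \<omega> ^ n)) \<omega> =
   of_nat n * complex_of_real (LL i \<omega>) * complex_of_real (X i \<omega>) ^ (n - 1) + mc i / 2 * complex_of_real (X i \<omega>) ^ n"
proof (induction n)
  case 0
  show ?case using Uop_one[of i] by simp
next
  case (Suc n)
  have mul: "mulX X i (\<lambda>\<omega>. complex_of_real (X i \<omega> ^ n)) = (\<lambda>\<omega>. complex_of_real (X i \<omega> ^ Suc n))"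
    unfolding mulX_def by simp
  have c: "AE \<omega> in M. Uop M X i (\<lambda>\<omega>. complex_of_real (X i \<omega> ^ Suc n)) \<omega> - complex_of_real (X i \<omega>) * Uop M X i (\<lambda>\<omega>. complex_of_real (X i \<omega> ^ n)) \<omega>
          = (\<Sum>k\<in>UNIV. complex_of_real (\<alpha> i i k) * complex_of_real (X k \<omega>) * complex_of_real (X i \<omega> ^ n))
            + complex_of_real (\<beta> i i) * complex_of_real (X i \<omega> ^ n)"
    using comm[rule_format, where i=i and j=i and f="\<lambda>\<omega>. complex_of_real (X i \<omega> ^ n)", OF Xpow_poly] unfolding mul .
  show ?case
    using c Suc.IH
  proof (eventually_elim)
    case (elim \<omega>)
    have L: "(\<Sum>k\<in>UNIV. complex_of_real (\<alpha> i i k) * complex_of_real (X k \<omega>) * complex_of_real (X i \<omega> ^ n))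
            + complex_of_real (\<beta> i i) * complex_of_real (X i \<omega> ^ n) = complex_of_real (LL i \<omega>) * complex_of_real (X i \<omega>) ^ n"
      unfolding LL_def of_real_add of_real_sum of_real_mult by (simp only: of_real_power distrib_right sum_distrib_right)
    have "Uop M X i (\<lambda>\<omega>. complex_of_real (X i \<omega> ^ Suc n)) \<omega> =
          complex_of_real (X i \<omega>) * Uop M X i (\<lambda>\<omega>. complex_of_real (X i \<omega> ^ n)) \<omega> + complex_of_real (LL i \<omega>) * complex_of_real (X i \<omega>) ^ n"
      using elim(1) L by (simp add: algebra_simps)
    also have "\<dots> = of_nat (Suc n) * complex_of_real (LL i \<omega>) * complex_of_real (X i \<omega>) ^ (Suc n - 1) + mc i / 2 * complex_of_real (X i \<omega>) ^ Suc n"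
      unfolding elim(2) by (rule alg_step)
    finally show ?case .
  qed
qed

end

context mxc begin

lemma tame_real_int: assumes t: "tame (\<lambda>\<omega>. complex_of_real (f \<omega>))" shows "integrable M f"
  using integrable_Re[OF tame_integrable[OF t]] by simp

lemma tame_LL: "tame (\<lambda>\<omega>. complex_of_real (LL i \<omega>))"
  unfolding LL_def of_real_add of_real_sum of_real_mult
  by (intro tame_add tame_sum tame_scale tame_X tame_const) auto

lemma tame_Xpow: "tame (\<lambda>\<omega>. complex_of_real (X i \<omega> ^ m))"
  using poly_tame[OF Xpow_in[of m m i]] by simp

lemma tame_Sm: "tame (\<lambda>\<omega>. complex_of_real (Sm \<omega>))"
  by (rule tameI[where C=1 and N=1]) (use Sm_nonneg in auto)

lemma stein:
  "integral\<^sup>L M (\<lambda>\<omega>. X i \<omega> ^ Suc n) =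
     integral\<^sup>L M (X i) * integral\<^sup>L M (\<lambda>\<omega>. X i \<omega> ^ n) + real n * integral\<^sup>L M (\<lambda>\<omega>. LL i \<omega> * X i \<omega> ^ (n - 1))"
proof -
  let ?p = "\<lambda>\<omega>. complex_of_real (X i \<omega> ^ n)"
  have mc_eq: "mc i = complex_of_real (integral\<^sup>L M (X i))" unfolding mc_def by simp
  have A: "integral\<^sup>L M (Uop M X i ?p) = complex_of_real (integral\<^sup>L M (\<lambda>\<omega>. X i \<omega> ^ Suc n)) - mc i / 2 * complex_of_real (integral\<^sup>L M (\<lambda>\<omega>. X i \<omega> ^ n))"
  proof -
    have e: "(\<lambda>\<omega>. complex_of_real (X i \<omega>) * ?p \<omega>) = (\<lambda>\<omega>. complex_of_real (X i \<omega> ^ Suc n))"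
      by (rule ext) (simp only: of_real_mult[symmetric] power_Suc)
    have "integral\<^sup>L M (\<lambda>\<omega>. complex_of_real (X i \<omega>) * ?p \<omega>) = complex_of_real (integral\<^sup>L M (\<lambda>\<omega>. X i \<omega> ^ Suc n))"
      unfolding e by (rule integral_complex_of_real)
    moreover have "integral\<^sup>L M ?p = complex_of_real (integral\<^sup>L M (\<lambda>\<omega>. X i \<omega> ^ n))"
      by (rule integral_complex_of_real)
    ultimately show ?thesis using E_Uop[OF Xpow_poly[of i n], of i] by simp
  qed
  have tU: "tame (Uop M X i ?p)" by (intro Uop_tame tame_Xpow)
  have tR1: "tame (\<lambda>\<omega>. complex_of_real (LL i \<omega> * X i \<omega> ^ (n - 1)))"
    unfolding of_real_mult by (intro tame_mult tame_LL tame_Xpow)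
  have B: "integral\<^sup>L M (Uop M X i ?p) = integral\<^sup>L M (\<lambda>\<omega>. of_nat n * complex_of_real (LL i \<omega> * X i \<omega> ^ (n - 1)) + mc i / 2 * complex_of_real (X i \<omega> ^ n))"
  proof (rule integral_cong_AE)
    show "Uop M X i ?p \<in> borel_measurable M" by (rule tame_meas[OF tU])
    show "(\<lambda>\<omega>. of_nat n * complex_of_real (LL i \<omega> * X i \<omega> ^ (n - 1)) + mc i / 2 * complex_of_real (X i \<omega> ^ n)) \<in> borel_measurable M"
      by (intro tame_meas tame_add tame_scale tR1 tame_Xpow)
    show "AE \<omega> in M. Uop M X i ?p \<omega> = of_nat n * complex_of_real (LL i \<omega> * X i \<omega> ^ (n - 1)) + mc i / 2 * complex_of_real (X i \<omega> ^ n)"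
      using U_pow[of i n] by (auto elim!: AE_mp simp: mult.assoc)
  qed
  have C: "integral\<^sup>L M (\<lambda>\<omega>. of_nat n * complex_of_real (LL i \<omega> * X i \<omega> ^ (n - 1)) + mc i / 2 * complex_of_real (X i \<omega> ^ n))
     = of_nat n * complex_of_real (integral\<^sup>L M (\<lambda>\<omega>. LL i \<omega> * X i \<omega> ^ (n - 1))) + mc i / 2 * complex_of_real (integral\<^sup>L M (\<lambda>\<omega>. X i \<omega> ^ n))"
  proof -
    have "integral\<^sup>L M (\<lambda>\<omega>. of_nat n * complex_of_real (LL i \<omega> * X i \<omega> ^ (n - 1)) + mc i / 2 * complex_of_real (X i \<omega> ^ n))
      = integral\<^sup>L M (\<lambda>\<omega>. of_nat n * complex_of_real (LL i \<omega> * X i \<omega> ^ (n - 1))) + integral\<^sup>L M (\<lambda>\<omega>. mc i / 2 * complex_of_real (X i \<omega> ^ n))"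
      by (rule Bochner_Integration.integral_add) (intro tame_integrable tame_scale tR1 tame_Xpow)+
    also have "\<dots> = of_nat n * complex_of_real (integral\<^sup>L M (\<lambda>\<omega>. LL i \<omega> * X i \<omega> ^ (n - 1))) + mc i / 2 * complex_of_real (integral\<^sup>L M (\<lambda>\<omega>. X i \<omega> ^ n))"
      by (simp only: integral_mult_right_zero integral_complex_of_real)
    finally show ?thesis .
  qed
  have "complex_of_real (integral\<^sup>L M (\<lambda>\<omega>. X i \<omega> ^ Suc n)) =
        mc i * complex_of_real (integral\<^sup>L M (\<lambda>\<omega>. X i \<omega> ^ n)) + of_nat n * complex_of_real (integral\<^sup>L M (\<lambda>\<omega>. LL i \<omega> * X i \<omega> ^ (n - 1)))"
  proof -
    let ?a = "complex_of_real (integral\<^sup>L M (\<lambda>\<omega>. X i \<omega> ^ Suc n))"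
    let ?b = "complex_of_real (integral\<^sup>L M (\<lambda>\<omega>. X i \<omega> ^ n))"
    let ?l = "complex_of_real (integral\<^sup>L M (\<lambda>\<omega>. LL i \<omega> * X i \<omega> ^ (n - 1)))"
    have E: "?a - mc i / 2 * ?b = of_nat n * ?l + mc i / 2 * ?b" using trans[OF A[symmetric] trans[OF B C]] .
    have "?a = (?a - mc i / 2 * ?b) + mc i / 2 * ?b" by simp
    also have "\<dots> = of_nat n * ?l + mc i / 2 * ?b + mc i / 2 * ?b" unfolding E ..
    also have "\<dots> = mc i * ?b + of_nat n * ?l" by (simp add: field_simps)
    finally show ?thesis .
  qed
  then have "complex_of_real (integral\<^sup>L M (\<lambda>\<omega>. X i \<omega> ^ Suc n)) =
     complex_of_real (integral\<^sup>L M (X i) * integral\<^sup>L M (\<lambda>\<omega>. X i \<omega> ^ n) + real n * integral\<^sup>L M (\<lambda>\<omega>. LL i \<omega> * X i \<omega> ^ (n - 1)))"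
    unfolding mc_eq by simp
  then show ?thesis by (simp only: of_real_eq_iff)
qed

end

lemma young_max: "(0::real) \<le> a \<Longrightarrow> 0 \<le> b \<Longrightarrow> b * a ^ n \<le> b ^ Suc n + a ^ Suc n"
proof (cases "a \<le> b")
  case True
  assume "0 \<le> a" "0 \<le> b"
  then have "b * a ^ n \<le> b * b ^ n" using True by (intro mult_left_mono power_mono) auto
  moreover have "0 \<le> a * a ^ n" using \<open>0 \<le> a\<close> by simp
  ultimately show ?thesis by simp
next
  case False
  assume "0 \<le> a" "0 \<le> b"
  then have "b * a ^ n \<le> a * a ^ n" using False by (intro mult_right_mono) auto
  moreover have "0 \<le> b * b ^ n" using \<open>0 \<le> b\<close> by simp
  ultimately show ?thesis by simp
qed

lemma mid_ineq: "(0::real) \<le> a \<Longrightarrow> 2 * c * a ^ Suc n \<le> a ^ Suc (Suc n) + c ^ 2 * a ^ n"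
proof -
  assume a: "0 \<le> a"
  have "0 \<le> a ^ n * (a - c) ^ 2" using a by simp
  then show ?thesis by (simp add: power2_eq_square algebra_simps)
qed

context mxc begin

lemma tame_pow: "tame f \<Longrightarrow> tame (\<lambda>\<omega>. f \<omega> ^ n)"
  by (induction n) (auto intro: tame_mult tame_const)

lemma tame_absX: "tame (\<lambda>\<omega>. complex_of_real \<bar>X i \<omega>\<bar>)"
proof (rule tameI[where C=1 and N=1])
  fix \<omega> show "cmod (complex_of_real \<bar>X i \<omega>\<bar>) \<le> 1 * (1 + Sm \<omega>) ^ 1"
    using X_le_Sm[of i \<omega>] by simp
qed auto

definition A0 where "A0 = (\<Sum>i\<in>UNIV. \<Sum>k\<in>UNIV. \<bar>\<alpha> i i k\<bar>)"
definition B0 where "B0 = (\<Sum>i\<in>UNIV. \<bar>\<beta> i i\<bar>)"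
definition Mm where "Mm = (\<Sum>i\<in>UNIV. \<bar>integral\<^sup>L M (X i)\<bar>)"
definition C0 where "C0 = Mm + B0 + 2 * real CARD('d) * A0 + 1"

lemma A0_nonneg: "0 \<le> A0" unfolding A0_def by (simp add: sum_nonneg)
lemma B0_nonneg: "0 \<le> B0" unfolding B0_def by (simp add: sum_nonneg)
lemma Mm_nonneg: "0 \<le> Mm" unfolding Mm_def by (simp add: sum_nonneg)
lemma C0_ge1: "1 \<le> C0" unfolding C0_def using A0_nonneg B0_nonneg Mm_nonneg by simp

lemma alpha_le: "\<bar>\<alpha> i i k\<bar> \<le> A0"
proof -
  have "\<bar>\<alpha> i i k\<bar> \<le> (\<Sum>k\<in>UNIV. \<bar>\<alpha> i i k\<bar>)" by (rule member_le_sum) auto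
  also have "\<dots> \<le> A0" unfolding A0_def by (rule member_le_sum[where f="\<lambda>i. \<Sum>k\<in>UNIV. \<bar>\<alpha> i i k\<bar>"]) (auto simp: sum_nonneg)
  finally show ?thesis .
qed

lemma beta_le: "\<bar>\<beta> i i\<bar> \<le> B0"
  unfolding B0_def by (rule member_le_sum[where f="\<lambda>i. \<bar>\<beta> i i\<bar>"]) auto

lemma m_le: "\<bar>integral\<^sup>L M (X i)\<bar> \<le> Mm"
  unfolding Mm_def by (rule member_le_sum[where f="\<lambda>i. \<bar>integral\<^sup>L M (X i)\<bar>"]) auto

lemma LL_bound: "\<bar>LL i \<omega>\<bar> \<le> B0 + A0 * Sm \<omega>"
proof -
  have "\<bar>LL i \<omega>\<bar> \<le> (\<Sum>k\<in>UNIV. \<bar>\<alpha> i i k * X k \<omega>\<bar>) + \<bar>\<beta> i i\<bar>"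
    unfolding LL_def by (rule order_trans[OF abs_triangle_ineq add_right_mono[OF sum_abs]])
  also have "\<dots> \<le> (\<Sum>k\<in>UNIV. A0 * \<bar>X k \<omega>\<bar>) + B0"
    by (intro add_mono sum_mono beta_le) (auto simp: abs_mult intro!: mult_right_mono alpha_le)
  also have "\<dots> = B0 + A0 * Sm \<omega>" unfolding Sm_def by (simp add: sum_distrib_left)
  finally show ?thesis .
qed

definition T :: "nat \<Rightarrow> 'a \<Rightarrow> real" where "T r \<omega> = (\<Sum>i\<in>UNIV. \<bar>X i \<omega>\<bar> ^ r)"
definition s :: "nat \<Rightarrow> real" where "s r = integral\<^sup>L M (T r)"

lemma T_int: "integrable M (T r)" unfolding T_def by (intro Bochner_Integration.integrable_sum Xint)
lemma T_nonneg: "0 \<le> T r \<omega>" unfolding T_def by (simp add: sum_nonneg)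
lemma s_nonneg: "0 \<le> s r" unfolding s_def by (intro integral_nonneg_AE AE_I2 T_nonneg)

definition F :: "'d \<Rightarrow> nat \<Rightarrow> 'a \<Rightarrow> real" where
  "F i q \<omega> = \<bar>integral\<^sup>L M (X i)\<bar> * \<bar>X i \<omega>\<bar> ^ (2*q+1) + real (2*q+1) * (B0 + A0 * Sm \<omega>) * \<bar>X i \<omega>\<bar> ^ (2*q)"

lemma F_int: "integrable M (F i q)"
  unfolding F_def
  by (rule tame_real_int, simp only: of_real_add of_real_mult of_real_power)
     (intro tame_add tame_mult tame_const tame_pow tame_absX tame_Sm)

lemma E_even_bound: "integral\<^sup>L M (\<lambda>\<omega>. \<bar>X i \<omega>\<bar> ^ (2*q+2)) \<le> integral\<^sup>L M (F i q)"
proof -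
  let ?m = "integral\<^sup>L M (X i)"
  have ev: "\<bar>X i \<omega>\<bar> ^ (2*q+2) = X i \<omega> ^ Suc (2*q+1)" for \<omega>
    by (simp add: power_even_abs)
  have "integral\<^sup>L M (\<lambda>\<omega>. \<bar>X i \<omega>\<bar> ^ (2*q+2)) = ?m * integral\<^sup>L M (\<lambda>\<omega>. X i \<omega> ^ (2*q+1)) + real (2*q+1) * integral\<^sup>L M (\<lambda>\<omega>. LL i \<omega> * X i \<omega> ^ (2*q))"
    unfolding ev using stein[of i "2*q+1"] by simp
  also have "\<dots> = integral\<^sup>L M (\<lambda>\<omega>. ?m * X i \<omega> ^ (2*q+1) + real (2*q+1) * (LL i \<omega> * X i \<omega> ^ (2*q)))"
  proof -
    have i1: "integrable M (\<lambda>\<omega>. ?m * X i \<omega> ^ (2*q+1))"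
      by (rule tame_real_int, simp only: of_real_add of_real_mult of_real_power)
         (intro tame_mult tame_const tame_pow tame_X)
    have i2: "integrable M (\<lambda>\<omega>. real (2*q+1) * (LL i \<omega> * X i \<omega> ^ (2*q)))"
      by (rule tame_real_int, simp only: of_real_add of_real_mult of_real_power)
         (intro tame_mult tame_const tame_pow tame_X tame_LL)
    show ?thesis using Bochner_Integration.integral_add[OF i1 i2] by simp
  qed
  also have "\<dots> \<le> integral\<^sup>L M (F i q)"
  proof (rule integral_mono)
    show "integrable M (\<lambda>\<omega>. ?m * X i \<omega> ^ (2*q+1) + real (2*q+1) * (LL i \<omega> * X i \<omega> ^ (2*q)))"
      by (rule tame_real_int, simp only: of_real_add of_real_mult of_real_power)
         (intro tame_add tame_mult tame_const tame_pow tame_X tame_LL)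
    show "integrable M (F i q)" by (rule F_int)
    fix \<omega>
    have a: "?m * X i \<omega> ^ (2*q+1) \<le> \<bar>?m\<bar> * \<bar>X i \<omega>\<bar> ^ (2*q+1)"
      using abs_ge_self[of "?m * X i \<omega> ^ (2*q+1)"] by (simp add: abs_mult power_abs)
    have "LL i \<omega> * X i \<omega> ^ (2*q) \<le> \<bar>LL i \<omega>\<bar> * \<bar>X i \<omega>\<bar> ^ (2*q)"
      using abs_ge_self[of "LL i \<omega> * X i \<omega> ^ (2*q)"] by (simp add: abs_mult power_abs)
    also have "\<dots> \<le> (B0 + A0 * Sm \<omega>) * \<bar>X i \<omega>\<bar> ^ (2*q)"
      by (intro mult_right_mono LL_bound) auto
    finally have b: "real (2*q+1) * (LL i \<omega> * X i \<omega> ^ (2*q)) \<le> real (2*q+1) * ((B0 + A0 * Sm \<omega>) * \<bar>X i \<omega>\<bar> ^ (2*q))"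
      by (intro mult_left_mono) auto
    show "?m * X i \<omega> ^ (2*q+1) + real (2*q+1) * (LL i \<omega> * X i \<omega> ^ (2*q)) \<le> F i q \<omega>"
      using add_mono[OF a b] unfolding F_def by (simp only: mult.assoc)
  qed
  finally show ?thesis .
qed

end

context mxc begin

lemma F_sum_bound: "(\<Sum>i\<in>UNIV. F i q \<omega>) \<le> real (2*q+1) * C0 * (T (2*q) \<omega> + T (2*q+1) \<omega>)"
proof -
  let ?d = "real CARD('d)"
  let ?n = "real (2*q+1)"
  let ?T = "T (2*q) \<omega>" and ?T' = "T (2*q+1) \<omega>"
  have T0: "0 \<le> ?T" "0 \<le> ?T'" by (rule T_nonneg)+
  have e1: "(\<Sum>i\<in>UNIV. \<bar>integral\<^sup>L M (X i)\<bar> * \<bar>X i \<omega>\<bar> ^ (2*q+1)) \<le> Mm * ?T'"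
    unfolding T_def sum_distrib_left by (intro sum_mono mult_right_mono m_le) auto
  have e3: "(\<Sum>i\<in>UNIV. Sm \<omega> * \<bar>X i \<omega>\<bar> ^ (2*q)) \<le> 2 * ?d * ?T'"
  proof -
    have "Sm \<omega> * \<bar>X i \<omega>\<bar> ^ (2*q) \<le> ?T' + ?d * \<bar>X i \<omega>\<bar> ^ (2*q+1)" for i
    proof -
      have "Sm \<omega> * \<bar>X i \<omega>\<bar> ^ (2*q) = (\<Sum>k\<in>UNIV. \<bar>X k \<omega>\<bar> * \<bar>X i \<omega>\<bar> ^ (2*q))"
        unfolding Sm_def by (simp add: sum_distrib_right)
      also have "\<dots> \<le> (\<Sum>k\<in>UNIV. \<bar>X k \<omega>\<bar> ^ (2*q+1) + \<bar>X i \<omega>\<bar> ^ (2*q+1))"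
        by (intro sum_mono) (simp add: young_max[simplified])
      also have "\<dots> = ?T' + ?d * \<bar>X i \<omega>\<bar> ^ (2*q+1)" unfolding T_def by (simp add: sum.distrib)
      finally show ?thesis .
    qed
    then have "(\<Sum>i\<in>UNIV. Sm \<omega> * \<bar>X i \<omega>\<bar> ^ (2*q)) \<le> (\<Sum>i\<in>UNIV. ?T' + ?d * \<bar>X i \<omega>\<bar> ^ (2*q+1))"
      by (intro sum_mono) auto
    also have "\<dots> = 2 * ?d * ?T'" unfolding T_def by (simp add: sum.distrib sum_distrib_left mult.assoc)
    finally show ?thesis .
  qed
  have e2: "(\<Sum>i\<in>UNIV. (B0 + A0 * Sm \<omega>) * \<bar>X i \<omega>\<bar> ^ (2*q)) = B0 * ?T + A0 * (\<Sum>i\<in>UNIV. Sm \<omega> * \<bar>X i \<omega>\<bar> ^ (2*q))"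
    unfolding T_def by (simp add: distrib_right sum.distrib sum_distrib_left mult.assoc)
  have "(\<Sum>i\<in>UNIV. F i q \<omega>) = (\<Sum>i\<in>UNIV. \<bar>integral\<^sup>L M (X i)\<bar> * \<bar>X i \<omega>\<bar> ^ (2*q+1)) + ?n * (\<Sum>i\<in>UNIV. (B0 + A0 * Sm \<omega>) * \<bar>X i \<omega>\<bar> ^ (2*q))"
    unfolding F_def by (simp add: sum.distrib sum_distrib_left mult.assoc)
  also have "\<dots> \<le> Mm * ?T' + ?n * (B0 * ?T + A0 * (2 * ?d * ?T'))"
    unfolding e2 using e1 e3 A0_nonneg B0_nonneg by (intro add_mono mult_left_mono) auto
  also have "\<dots> \<le> ?n * (Mm * ?T' + B0 * ?T + 2 * ?d * A0 * ?T')"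
  proof -
    have z: "0 \<le> Mm * ?T'" using Mm_nonneg T0 by simp
    have o: "1 \<le> ?n" by simp
    have "Mm * ?T' \<le> ?n * (Mm * ?T')" using mult_right_mono[OF o z] by simp
    then show ?thesis by (simp add: algebra_simps)
  qed
  also have "\<dots> \<le> ?n * (C0 * (?T + ?T'))"
  proof (rule mult_left_mono)
    have "B0 * ?T \<le> C0 * ?T" using T0 by (intro mult_right_mono) (auto simp: C0_def A0_nonneg Mm_nonneg)
    moreover have "(Mm + 2 * ?d * A0) * ?T' \<le> C0 * ?T'" using T0 by (intro mult_right_mono) (auto simp: C0_def B0_nonneg)
    ultimately show "Mm * ?T' + B0 * ?T + 2 * ?d * A0 * ?T' \<le> C0 * (?T + ?T')" by (simp add: algebra_simps)
  qed auto
  finally show ?thesis by (simp add: mult.assoc)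
qed

end

context mxc begin

definition KK where "KK = 12 * C0 ^ 2"

lemma s_rec: "s (2*q+2) \<le> KK * (real q + 1) ^ 2 * s (2*q)"
proof -
  let ?n = "real (2*q+1)"
  define c where "c = ?n * C0"
  have c1: "1 \<le> c"
  proof -
    have "1 * 1 \<le> ?n * C0" by (rule mult_mono) (use C0_ge1 in auto)
    then show ?thesis unfolding c_def by simp
  qed
  have absint: "integrable M (\<lambda>\<omega>. \<bar>X i \<omega>\<bar> ^ r)" for i r by (rule Xint)
  have sT: "s r = (\<Sum>i\<in>UNIV. integral\<^sup>L M (\<lambda>\<omega>. \<bar>X i \<omega>\<bar> ^ r))" for r
    unfolding s_def T_def by (rule Bochner_Integration.integral_sum) (rule Xint)
  have r1: "s (2*q+2) \<le> c * s (2*q) + c * s (2*q+1)"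
  proof -
    have "s (2*q+2) \<le> (\<Sum>i\<in>UNIV. integral\<^sup>L M (F i q))"
      unfolding sT by (intro sum_mono E_even_bound)
    also have "\<dots> = integral\<^sup>L M (\<lambda>\<omega>. \<Sum>i\<in>UNIV. F i q \<omega>)"
      by (rule Bochner_Integration.integral_sum[symmetric]) (rule F_int)
    also have "\<dots> \<le> integral\<^sup>L M (\<lambda>\<omega>. c * T (2*q) \<omega> + c * T (2*q+1) \<omega>)"
    proof (rule integral_mono)
      fix \<omega> show "(\<Sum>i\<in>UNIV. F i q \<omega>) \<le> c * T (2*q) \<omega> + c * T (2*q+1) \<omega>"
        using F_sum_bound[of q \<omega>] unfolding c_def by (simp only: distrib_left)
    qed (auto intro!: Bochner_Integration.integrable_sum F_int T_int)
    also have "\<dots> = c * s (2*q) + c * s (2*q+1)"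
      unfolding s_def by (simp add: T_int)
    finally show ?thesis .
  qed
  have r2: "2 * c * s (2*q+1) \<le> s (2*q+2) + c^2 * s (2*q)"
  proof -
    have "2 * c * s (2*q+1) = integral\<^sup>L M (\<lambda>\<omega>. 2 * c * T (2*q+1) \<omega>)" unfolding s_def by simp
    also have "\<dots> \<le> integral\<^sup>L M (\<lambda>\<omega>. T (2*q+2) \<omega> + c^2 * T (2*q) \<omega>)"
    proof (rule integral_mono)
      fix \<omega>
      have "2 * c * T (2*q+1) \<omega> = (\<Sum>i\<in>UNIV. 2 * c * \<bar>X i \<omega>\<bar> ^ Suc (2*q))"
        unfolding T_def by (simp add: sum_distrib_left)
      also have "\<dots> \<le> (\<Sum>i\<in>UNIV. \<bar>X i \<omega>\<bar> ^ Suc (Suc (2*q)) + c^2 * \<bar>X i \<omega>\<bar> ^ (2*q))"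
        by (intro sum_mono mid_ineq) auto
      also have "\<dots> = T (2*q+2) \<omega> + c^2 * T (2*q) \<omega>"
        unfolding T_def by (simp add: sum.distrib sum_distrib_left)
      finally show "2 * c * T (2*q+1) \<omega> \<le> T (2*q+2) \<omega> + c^2 * T (2*q) \<omega>" .
    qed (auto intro!: T_int Bochner_Integration.integrable_add integrable_mult_right)
    also have "\<dots> = s (2*q+2) + c^2 * s (2*q)"
      unfolding s_def by (simp add: T_int)
    finally show ?thesis .
  qed
  have r3: "s (2*q+2) \<le> 2 * c * s (2*q) + c^2 * s (2*q)"
    using r1 r2 by (simp add: algebra_simps)
  have "c * s (2*q) \<le> c^2 * s (2*q)"
    using c1 s_nonneg by (intro mult_right_mono) (auto simp: power2_eq_square)
  then have r4: "s (2*q+2) \<le> 3 * c^2 * s (2*q)" using r3 by simp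
  have "c \<le> 2 * (real q + 1) * C0" unfolding c_def using C0_ge1 by (intro mult_right_mono) auto
  then have "c^2 \<le> (2 * (real q + 1) * C0)^2" using c1 by (intro power_mono) auto
  then have "3 * c^2 * s (2*q) \<le> 3 * (2 * (real q + 1) * C0)^2 * s (2*q)"
    using s_nonneg by (intro mult_right_mono) auto
  also have "\<dots> = KK * (real q + 1) ^ 2 * s (2*q)" unfolding KK_def by (simp add: power_mult_distrib power2_eq_square algebra_simps)
  finally show ?thesis using r4 by simp
qed

lemma s0: "s 0 = real CARD('d)" unfolding s_def T_def by (simp add: prob_space)

lemma KK_nonneg: "0 \<le> KK" unfolding KK_def by simp

lemma s_bound: "s (2*q) \<le> real CARD('d) * KK ^ q * (fact q) ^ 2"
proof (induction q)
  case 0 then show ?case by (simp add: s0)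
next
  case (Suc q)
  have "s (2 * Suc q) \<le> KK * (real q + 1) ^ 2 * s (2*q)" using s_rec[of q] by simp
  also have "\<dots> \<le> KK * (real q + 1) ^ 2 * (real CARD('d) * KK ^ q * (fact q) ^ 2)"
    using Suc.IH KK_nonneg by (intro mult_left_mono) auto
  also have "\<dots> = real CARD('d) * KK ^ Suc q * ((real q + 1) * fact q) ^ 2"
    by (simp add: power_mult_distrib mult_ac)
  also have "(real q + 1) * fact q = (fact (Suc q) :: real)" by (simp add: fact_Suc)
  finally show ?case .
qed

end

lemma fact_sq_le: "(fact q :: real) ^ 2 \<le> fact (2*q)"
proof -
  have "fact q * fact (2*q - q) * (2*q choose q) = (fact (2*q) :: nat)"
    by (rule binomial_fact_lemma) simp
  moreover have "0 < (2*q choose q)" by simp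
  moreover have "1 \<le> (2*q choose q)" using \<open>0 < (2*q choose q)\<close> by linarith
  then have "fact q * fact q * 1 \<le> fact q * fact q * (2*q choose q)" by (rule mult_le_mono2)
  ultimately have "fact q * fact q \<le> (fact (2*q) :: nat)" by simp
  then have "real (fact q * fact q) \<le> real (fact (2*q))" by (simp only: of_nat_le_iff)
  then show ?thesis by (simp add: power2_eq_square)
qed

lemma cosh_series: "(\<lambda>N. \<Sum>q<N. x ^ (2*q) / fact (2*q)) \<longlonglongrightarrow> cosh (x::real)"
proof -
  have "(\<lambda>n. if even n then x ^ n /\<^sub>R fact n else 0) sums cosh x" by (rule cosh_converges)
  then have "(\<lambda>q. (\<lambda>n. if even n then x ^ n /\<^sub>R fact n else 0) (2*q)) sums cosh x"
    by (subst sums_mono_reindex) (auto simp: strict_mono_def elim!: oddE)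
  then have "(\<lambda>q. x ^ (2*q) / fact (2*q)) sums cosh x" by (simp add: divide_inverse mult.commute)
  then show ?thesis by (simp add: sums_def)
qed

context mxc begin

lemma exp_moment_X:
  fixes \<sigma> :: real
  assumes sp: "0 < \<sigma>" and sK: "\<sigma>^2 * KK \<le> 1/4"
  shows "integrable M (\<lambda>\<omega>. exp (\<sigma> * \<bar>X i \<omega>\<bar>))"
proof -
  let ?d = "real CARD('d)"
  define a where "a q = \<sigma>^(2*q) * integral\<^sup>L M (\<lambda>\<omega>. \<bar>X i \<omega>\<bar> ^ (2*q)) / fact (2*q)" for q
  define f where "f N \<omega> = (\<Sum>q<N. (\<sigma> * X i \<omega>) ^ (2*q) / fact (2*q))" for N \<omega>
  have Ei: "integral\<^sup>L M (\<lambda>\<omega>. \<bar>X i \<omega>\<bar> ^ r) \<le> s r" for r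
    unfolding s_def T_def
    by (subst Bochner_Integration.integral_sum)
       (auto intro!: Xint member_le_sum[where f="\<lambda>i. integral\<^sup>L M (\<lambda>\<omega>. \<bar>X i \<omega>\<bar> ^ r)"] integral_nonneg_AE)
  have a_nonneg: "0 \<le> a q" for q unfolding a_def by (intro divide_nonneg_pos mult_nonneg_nonneg integral_nonneg_AE) auto
  have a_le: "a q \<le> ?d * (1/4) ^ q" for q
  proof -
    have "a q \<le> \<sigma>^(2*q) * (?d * KK ^ q * (fact q) ^ 2) / fact (2*q)"
      unfolding a_def using order_trans[OF Ei s_bound]
      by (intro divide_right_mono mult_left_mono) auto
    also have "\<dots> \<le> \<sigma>^(2*q) * (?d * KK ^ q)"
    proof -
      have "(fact q) ^ 2 / fact (2*q) \<le> (1::real)" using fact_sq_le[of q] by simp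
      then have h: "?d * KK ^ q * ((fact q) ^ 2 / fact (2*q)) \<le> ?d * KK ^ q * 1"
        using KK_nonneg by (intro mult_left_mono) auto
      have "\<sigma>^(2*q) * (?d * KK ^ q * ((fact q) ^ 2 / fact (2*q))) \<le> \<sigma>^(2*q) * (?d * KK ^ q * 1)"
        using mult_left_mono[OF h, of "\<sigma>^(2*q)"] sp by simp
      then show ?thesis by simp
    qed
    also have "\<dots> = ?d * (\<sigma>^2 * KK) ^ q" by (simp add: power_mult power_mult_distrib)
    also have "\<dots> \<le> ?d * (1/4) ^ q"
      using sK sp KK_nonneg by (intro mult_left_mono power_mono) auto
    finally show ?thesis .
  qed
  have summ: "summable a"
  proof (rule summable_comparison_test)
    show "\<exists>N. \<forall>n\<ge>N. norm (a n) \<le> ?d * (1/4) ^ n" using a_le a_nonneg by auto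
    show "summable (\<lambda>n. ?d * (1/4::real) ^ n)" by (intro summable_mult summable_geometric) auto
  qed
  have eqf: "(\<lambda>\<omega>. (\<sigma> * X i \<omega>) ^ (2*q) / fact (2*q)) = (\<lambda>\<omega>. \<sigma>^(2*q) * \<bar>X i \<omega>\<bar> ^ (2*q) / fact (2*q))" for q
    by (simp add: power_mult_distrib power_even_abs)
  have tint: "integrable M (\<lambda>\<omega>. (\<sigma> * X i \<omega>) ^ (2*q) / fact (2*q))" for q
    unfolding eqf by (intro integrable_divide integrable_mult_right Xint)
  have fint: "integrable M (f N)" for N
    unfolding f_def by (intro Bochner_Integration.integrable_sum tint)
  have Ef: "integral\<^sup>L M (f N) = (\<Sum>q<N. a q)" for N
  proof -
    have "integral\<^sup>L M (f N) = (\<Sum>q<N. integral\<^sup>L M (\<lambda>\<omega>. (\<sigma> * X i \<omega>) ^ (2*q) / fact (2*q)))"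
      unfolding f_def by (rule Bochner_Integration.integral_sum) (rule tint)
    also have "\<dots> = (\<Sum>q<N. a q)"
    proof (rule sum.cong)
      fix q
      show "integral\<^sup>L M (\<lambda>\<omega>. (\<sigma> * X i \<omega>) ^ (2*q) / fact (2*q)) = a q"
        unfolding a_def eqf by simp
    qed simp
    finally show ?thesis .
  qed
  have icosh: "integrable M (\<lambda>\<omega>. cosh (\<sigma> * X i \<omega>))"
  proof (rule integral_monotone_convergence_nonneg(1))
    show "\<And>N. integrable M (f N)" by (rule fint)
    show "AE \<omega> in M. mono (\<lambda>N. f N \<omega>)"
      unfolding f_def by (intro AE_I2 monoI sum_mono2) (auto simp: power_mult power2_eq_square)
    show "\<And>N. AE \<omega> in M. 0 \<le> f N \<omega>"
      unfolding f_def by (intro AE_I2 sum_nonneg divide_nonneg_pos) (auto simp: power_mult)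
    show "AE \<omega> in M. (\<lambda>N. f N \<omega>) \<longlonglongrightarrow> cosh (\<sigma> * X i \<omega>)"
      unfolding f_def by (intro AE_I2 cosh_series)
    show "(\<lambda>N. integral\<^sup>L M (f N)) \<longlonglongrightarrow> suminf a"
      unfolding Ef by (rule summable_LIMSEQ[OF summ])
    show "(\<lambda>\<omega>. cosh (\<sigma> * X i \<omega>)) \<in> borel_measurable M"
      unfolding cosh_def by measurable
  qed
  show ?thesis
  proof (rule Bochner_Integration.integrable_bound)
    show "integrable M (\<lambda>\<omega>. 2 * cosh (\<sigma> * X i \<omega>))" by (intro integrable_mult_right icosh)
    show "(\<lambda>\<omega>. exp (\<sigma> * \<bar>X i \<omega>\<bar>)) \<in> borel_measurable M" by measurable
    show "AE \<omega> in M. norm (exp (\<sigma> * \<bar>X i \<omega>\<bar>)) \<le> norm (2 * cosh (\<sigma> * X i \<omega>))"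
    proof (intro AE_I2)
      fix \<omega>
      have "exp (\<sigma> * \<bar>X i \<omega>\<bar>) \<le> exp (\<sigma> * X i \<omega>) + exp (- (\<sigma> * X i \<omega>))"
        by (cases "0 \<le> X i \<omega>") (auto simp: add_increasing add_increasing2)
      then show "norm (exp (\<sigma> * \<bar>X i \<omega>\<bar>)) \<le> norm (2 * cosh (\<sigma> * X i \<omega>))"
        by (simp add: cosh_def)
    qed
  qed
qed

lemma exp_moment_Sm: "\<exists>\<tau>>0. integrable M (\<lambda>\<omega>. exp (\<tau> * Sm \<omega>))"
proof -
  let ?d = "real CARD('d)"
  define \<sigma> where "\<sigma> = 1 / (2 * (KK + 1))"
  have sp: "0 < \<sigma>" unfolding \<sigma>_def using KK_nonneg by simp
  have sK: "\<sigma>^2 * KK \<le> 1/4"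
  proof -
    have "KK \<le> (KK + 1)^2"
      using mult_nonneg_nonneg[OF KK_nonneg KK_nonneg] KK_nonneg by (simp add: power2_eq_square algebra_simps)
    then have "\<sigma>^2 * KK \<le> \<sigma>^2 * (KK + 1)^2" by (intro mult_left_mono) auto
    also have "\<dots> = (\<sigma> * (KK + 1))^2" by (simp add: power_mult_distrib)
    also have "\<sigma> * (KK + 1) = 1/2" unfolding \<sigma>_def using KK_nonneg by simp
    finally show ?thesis by (simp add: power2_eq_square)
  qed
  define \<tau> where "\<tau> = \<sigma> / ?d"
  have tp: "0 < \<tau>" unfolding \<tau>_def using sp by simp
  have "integrable M (\<lambda>\<omega>. exp (\<tau> * Sm \<omega>))"
  proof (rule Bochner_Integration.integrable_bound)
    show "integrable M (\<lambda>\<omega>. \<Sum>i\<in>UNIV. exp (\<tau> * (?d * \<bar>X i \<omega>\<bar>)))"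
      using exp_moment_X[OF sp sK] unfolding \<tau>_def by (intro Bochner_Integration.integrable_sum) simp
    show "(\<lambda>\<omega>. exp (\<tau> * Sm \<omega>)) \<in> borel_measurable M" by measurable
    show "AE \<omega> in M. norm (exp (\<tau> * Sm \<omega>)) \<le> norm (\<Sum>i\<in>UNIV. exp (\<tau> * (?d * \<bar>X i \<omega>\<bar>)))"
    proof (intro AE_I2)
      fix \<omega>
      have "exp (\<tau> * Sm \<omega>) \<le> (\<Sum>i\<in>UNIV. exp (\<tau> * (?d * \<bar>X i \<omega>\<bar>)))"
        by (rule mono_Sm_bound[where g="\<lambda>s. exp (\<tau> * s)"]) (use tp in \<open>auto simp: mono_def\<close>)
      then show "norm (exp (\<tau> * Sm \<omega>)) \<le> norm (\<Sum>i\<in>UNIV. exp (\<tau> * (?d * \<bar>X i \<omega>\<bar>)))"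
        by (simp add: sum_nonneg)
    qed
  qed
  with tp show ?thesis by blast
qed

end

lemma exp_taylor2: fixes x :: real shows "\<bar>exp x - 1 - x\<bar> \<le> x^2 * exp \<bar>x\<bar>"
proof -
  obtain t where t: "\<bar>t\<bar> \<le> \<bar>x\<bar>" "exp x = (\<Sum>m<2. x ^ m / fact m) + exp t / fact 2 * x ^ 2"
    using Maclaurin_exp_le[of x 2] by blast
  have e: "exp x - 1 - x = exp t / 2 * x^2" using t(2) by (simp add: numeral_2_eq_2)
  have "exp t \<le> exp \<bar>x\<bar>" using t(1) by simp
  then have h: "exp t * x^2 \<le> exp \<bar>x\<bar> * x^2" by (intro mult_right_mono) auto
  have "0 \<le> exp t * x^2" by simp
  moreover have "exp t / 2 * x^2 = (exp t * x^2) / 2" by simp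
  moreover have "x^2 * exp \<bar>x\<bar> = exp \<bar>x\<bar> * x^2" by simp
  ultimately have "exp t / 2 * x^2 \<le> x^2 * exp \<bar>x\<bar>" using h by linarith
  moreover have "0 \<le> exp t / 2 * x^2" by simp
  ultimately show ?thesis unfolding e by simp
qed

lemma exp_diff_bound: fixes a b :: real shows "\<bar>exp a - exp b\<bar> \<le> \<bar>a - b\<bar> * (exp a + exp b)"
proof -
  have main: "exp a - exp b \<le> (a - b) * exp a" if "b \<le> a" for a b :: real
  proof -
    have "1 + (b - a) \<le> exp (b - a)" by (rule exp_ge_add_one_self)
    then have "exp a * (1 + (b - a)) \<le> exp a * exp (b - a)" by simp
    also have "\<dots> = exp b" by (simp add: exp_diff)
    finally show ?thesis by (simp add: algebra_simps)
  qed
  show ?thesis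
  proof (cases "b \<le> a")
    case True
    have "0 \<le> exp a - exp b" using True by simp
    then have "\<bar>exp a - exp b\<bar> \<le> (a - b) * exp a" using main[OF True] by simp
    also have "\<dots> \<le> \<bar>a - b\<bar> * (exp a + exp b)" using True by (intro mult_mono) auto
    finally show ?thesis .
  next
    case False
    have "0 \<le> exp b - exp a" using False by simp
    then have "\<bar>exp a - exp b\<bar> \<le> (b - a) * exp b" using main[of a b] False by simp
    also have "\<dots> \<le> \<bar>a - b\<bar> * (exp a + exp b)" using False by (intro mult_mono) auto
    finally show ?thesis .
  qed
qed

lemma deriv_lemma:
  fixes g Y Z H :: "'a \<Rightarrow> real" and \<delta> :: real
  assumes dp: "0 < \<delta>"
    and m[measurable]: "g \<in> borel_measurable M" "Y \<in> borel_measurable M" "Z \<in> borel_measurable M"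
    and iH: "integrable M H"
    and bH: "\<And>\<omega>. \<bar>g \<omega>\<bar> * (1 + \<bar>Y \<omega>\<bar>)^2 * exp (Z \<omega> + \<delta> * \<bar>Y \<omega>\<bar>) \<le> H \<omega>"
  shows "((\<lambda>s. integral\<^sup>L M (\<lambda>\<omega>. g \<omega> * exp (Z \<omega> + s * Y \<omega>))) has_real_derivative
            integral\<^sup>L M (\<lambda>\<omega>. g \<omega> * Y \<omega> * exp (Z \<omega>))) (at 0)"
proof -
  define \<psi> where "\<psi> s = integral\<^sup>L M (\<lambda>\<omega>. g \<omega> * exp (Z \<omega> + s * Y \<omega>))" for s
  define D where "D = integral\<^sup>L M (\<lambda>\<omega>. g \<omega> * Y \<omega> * exp (Z \<omega>))"
  have pw1: "\<bar>g \<omega>\<bar> * exp (Z \<omega> + s * Y \<omega>) \<le> H \<omega>" if "\<bar>s\<bar> \<le> \<delta>" for s \<omega>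
  proof -
    have "s * Y \<omega> \<le> \<bar>s\<bar> * \<bar>Y \<omega>\<bar>" by (simp add: abs_mult[symmetric])
    also have "\<dots> \<le> \<delta> * \<bar>Y \<omega>\<bar>" using that by (intro mult_right_mono) auto
    finally have "s * Y \<omega> \<le> \<delta> * \<bar>Y \<omega>\<bar>" .
    then have "exp (Z \<omega> + s * Y \<omega>) \<le> exp (Z \<omega> + \<delta> * \<bar>Y \<omega>\<bar>)" by simp
    also have "\<dots> \<le> (1 + \<bar>Y \<omega>\<bar>)^2 * exp (Z \<omega> + \<delta> * \<bar>Y \<omega>\<bar>)"
    proof -
      have o: "1 \<le> (1 + \<bar>Y \<omega>\<bar>)^2" by (rule one_le_power) simp
      show ?thesis using mult_right_mono[OF o, of "exp (Z \<omega> + \<delta> * \<bar>Y \<omega>\<bar>)"] by simp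
    qed
    finally have "\<bar>g \<omega>\<bar> * exp (Z \<omega> + s * Y \<omega>) \<le> \<bar>g \<omega>\<bar> * ((1 + \<bar>Y \<omega>\<bar>)^2 * exp (Z \<omega> + \<delta> * \<bar>Y \<omega>\<bar>))"
      by (intro mult_left_mono) auto
    then show ?thesis using bH[of \<omega>] by (simp add: mult.assoc)
  qed
  have int1: "integrable M (\<lambda>\<omega>. g \<omega> * exp (Z \<omega> + s * Y \<omega>))" if "\<bar>s\<bar> \<le> \<delta>" for s
  proof (rule Bochner_Integration.integrable_bound[OF iH])
    show "(\<lambda>\<omega>. g \<omega> * exp (Z \<omega> + s * Y \<omega>)) \<in> borel_measurable M" by measurable
    show "AE \<omega> in M. norm (g \<omega> * exp (Z \<omega> + s * Y \<omega>)) \<le> norm (H \<omega>)"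
    proof (intro AE_I2)
      fix \<omega> have "\<bar>g \<omega>\<bar> * exp (Z \<omega> + s * Y \<omega>) \<le> H \<omega>" by (rule pw1[OF that])
      then show "norm (g \<omega> * exp (Z \<omega> + s * Y \<omega>)) \<le> norm (H \<omega>)" by (simp add: abs_mult)
    qed
  qed
  have int2: "integrable M (\<lambda>\<omega>. g \<omega> * Y \<omega> * exp (Z \<omega>))"
  proof (rule Bochner_Integration.integrable_bound[OF iH])
    show "(\<lambda>\<omega>. g \<omega> * Y \<omega> * exp (Z \<omega>)) \<in> borel_measurable M" by measurable
    show "AE \<omega> in M. norm (g \<omega> * Y \<omega> * exp (Z \<omega>)) \<le> norm (H \<omega>)"
    proof (intro AE_I2)
      fix \<omega>
      have "\<bar>Y \<omega>\<bar> \<le> (1 + \<bar>Y \<omega>\<bar>)^2" by (simp add: power2_eq_square algebra_simps)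
      moreover have "exp (Z \<omega>) \<le> exp (Z \<omega> + \<delta> * \<bar>Y \<omega>\<bar>)" using dp by simp
      ultimately have "\<bar>Y \<omega>\<bar> * exp (Z \<omega>) \<le> (1 + \<bar>Y \<omega>\<bar>)^2 * exp (Z \<omega> + \<delta> * \<bar>Y \<omega>\<bar>)"
        by (intro mult_mono) auto
      then have "\<bar>g \<omega>\<bar> * (\<bar>Y \<omega>\<bar> * exp (Z \<omega>)) \<le> \<bar>g \<omega>\<bar> * ((1 + \<bar>Y \<omega>\<bar>)^2 * exp (Z \<omega> + \<delta> * \<bar>Y \<omega>\<bar>))"
        by (intro mult_left_mono) auto
      then have h: "\<bar>g \<omega>\<bar> * (\<bar>Y \<omega>\<bar> * exp (Z \<omega>)) \<le> H \<omega>"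
        using bH[of \<omega>] by (simp add: mult.assoc)
      have "norm (g \<omega> * Y \<omega> * exp (Z \<omega>)) = \<bar>g \<omega>\<bar> * (\<bar>Y \<omega>\<bar> * exp (Z \<omega>))" by (simp add: abs_mult)
      also have "\<dots> \<le> H \<omega>" by (rule h)
      also have "\<dots> \<le> norm (H \<omega>)" by simp
      finally show "norm (g \<omega> * Y \<omega> * exp (Z \<omega>)) \<le> norm (H \<omega>)" .
    qed
  qed
  have key: "\<bar>\<psi> s - \<psi> 0 - s * D\<bar> \<le> s^2 * integral\<^sup>L M H" if s: "\<bar>s\<bar> \<le> \<delta>" for s
  proof -
    have "\<psi> s - \<psi> 0 - s * D = integral\<^sup>L M (\<lambda>\<omega>. g \<omega> * exp (Z \<omega> + s * Y \<omega>) - g \<omega> * exp (Z \<omega> + 0 * Y \<omega>) - s * (g \<omega> * Y \<omega> * exp (Z \<omega>)))"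
      unfolding \<psi>_def D_def
      using int1[OF s] int1[of 0] int2 dp
      by (subst Bochner_Integration.integral_diff Bochner_Integration.integral_diff; auto)+
    also have "\<dots> = integral\<^sup>L M (\<lambda>\<omega>. g \<omega> * exp (Z \<omega>) * (exp (s * Y \<omega>) - 1 - s * Y \<omega>))"
      by (intro Bochner_Integration.integral_cong) (auto simp: exp_add algebra_simps)
    finally have e: "\<psi> s - \<psi> 0 - s * D = integral\<^sup>L M (\<lambda>\<omega>. g \<omega> * exp (Z \<omega>) * (exp (s * Y \<omega>) - 1 - s * Y \<omega>))" .
    have pw: "\<bar>g \<omega> * exp (Z \<omega>) * (exp (s * Y \<omega>) - 1 - s * Y \<omega>)\<bar> \<le> s^2 * H \<omega>" for \<omega>
    proof -
      have "\<bar>exp (s * Y \<omega>) - 1 - s * Y \<omega>\<bar> \<le> (s * Y \<omega>)^2 * exp \<bar>s * Y \<omega>\<bar>" by (rule exp_taylor2)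
      also have "\<dots> \<le> s^2 * ((1 + \<bar>Y \<omega>\<bar>)^2 * exp (\<delta> * \<bar>Y \<omega>\<bar>))"
      proof -
        have "(Y \<omega>)^2 = \<bar>Y \<omega>\<bar>^2" by simp
        also have "\<dots> \<le> (1 + \<bar>Y \<omega>\<bar>)^2" by (intro power_mono) auto
        finally have "(Y \<omega>)^2 \<le> (1 + \<bar>Y \<omega>\<bar>)^2" .
        moreover have "exp \<bar>s * Y \<omega>\<bar> \<le> exp (\<delta> * \<bar>Y \<omega>\<bar>)" using s by (simp add: abs_mult mult_right_mono)
        ultimately have "(Y \<omega>)^2 * exp \<bar>s * Y \<omega>\<bar> \<le> (1 + \<bar>Y \<omega>\<bar>)^2 * exp (\<delta> * \<bar>Y \<omega>\<bar>)"
          by (intro mult_mono) auto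
        then show ?thesis by (simp add: power_mult_distrib mult.assoc mult_left_mono)
      qed
      finally have a: "\<bar>exp (s * Y \<omega>) - 1 - s * Y \<omega>\<bar> \<le> s^2 * ((1 + \<bar>Y \<omega>\<bar>)^2 * exp (\<delta> * \<bar>Y \<omega>\<bar>))" .
      have "\<bar>g \<omega> * exp (Z \<omega>) * (exp (s * Y \<omega>) - 1 - s * Y \<omega>)\<bar> = \<bar>g \<omega>\<bar> * exp (Z \<omega>) * \<bar>exp (s * Y \<omega>) - 1 - s * Y \<omega>\<bar>"
        by (simp add: abs_mult)
      also have "\<dots> \<le> \<bar>g \<omega>\<bar> * exp (Z \<omega>) * (s^2 * ((1 + \<bar>Y \<omega>\<bar>)^2 * exp (\<delta> * \<bar>Y \<omega>\<bar>)))"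
        using a by (intro mult_left_mono) auto
      also have "\<dots> = s^2 * (\<bar>g \<omega>\<bar> * (1 + \<bar>Y \<omega>\<bar>)^2 * exp (Z \<omega> + \<delta> * \<bar>Y \<omega>\<bar>))"
        by (simp add: exp_add algebra_simps)
      also have "\<dots> \<le> s^2 * H \<omega>" using bH[of \<omega>] by (intro mult_left_mono) auto
      finally show ?thesis .
    qed
    define fI where "fI \<omega> = g \<omega> * exp (Z \<omega>) * (exp (s * Y \<omega>) - 1 - s * Y \<omega>)" for \<omega>
    have ifI: "integrable M fI"
    proof (rule Bochner_Integration.integrable_bound[OF integrable_mult_right[OF iH, of "s^2"]])
      show "fI \<in> borel_measurable M" unfolding fI_def by measurable
      show "AE \<omega> in M. norm (fI \<omega>) \<le> norm (s^2 * H \<omega>)"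
      proof (intro AE_I2)
        fix \<omega> have "norm (fI \<omega>) \<le> s^2 * H \<omega>" using pw[of \<omega>] unfolding fI_def by simp
        also have "\<dots> \<le> norm (s^2 * H \<omega>)" by simp
        finally show "norm (fI \<omega>) \<le> norm (s^2 * H \<omega>)" .
      qed
    qed
    have "\<bar>integral\<^sup>L M fI\<bar> \<le> integral\<^sup>L M (\<lambda>\<omega>. norm (fI \<omega>))"
      using integral_norm_bound[of M fI] by simp
    also have "\<dots> \<le> integral\<^sup>L M (\<lambda>\<omega>. s^2 * H \<omega>)"
      by (rule integral_mono) (auto intro: integrable_norm ifI integrable_mult_right iH simp: pw[unfolded fI_def[symmetric]])
    finally have "\<bar>integral\<^sup>L M (\<lambda>\<omega>. g \<omega> * exp (Z \<omega>) * (exp (s * Y \<omega>) - 1 - s * Y \<omega>))\<bar> \<le> integral\<^sup>L M (\<lambda>\<omega>. s^2 * H \<omega>)"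
      unfolding fI_def .
    then show ?thesis unfolding e by simp
  qed
  have lim: "((\<lambda>s. (\<psi> s - \<psi> 0) / (s - 0) - D) \<longlongrightarrow> 0) (at 0)"
  proof (rule Lim_null_comparison)
    show "\<forall>\<^sub>F s in at 0. norm ((\<psi> s - \<psi> 0) / (s - 0) - D) \<le> \<bar>s\<bar> * integral\<^sup>L M H"
    proof -
      have "\<forall>\<^sub>F s in at (0::real). \<bar>s\<bar> \<le> \<delta> \<and> s \<noteq> 0"
        using eventually_at[of "\<lambda>s. \<bar>s\<bar> \<le> \<delta>" "0::real" UNIV] dp
        by (auto simp: eventually_at dist_real_def intro: exI[of _ \<delta>])
      then show ?thesis
      proof (rule eventually_mono)
        fix s :: real assume s: "\<bar>s\<bar> \<le> \<delta> \<and> s \<noteq> 0"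
        have "(\<psi> s - \<psi> 0) / (s - 0) - D = (\<psi> s - \<psi> 0 - s * D) / s" using s by (simp add: field_simps)
        then have "norm ((\<psi> s - \<psi> 0) / (s - 0) - D) = \<bar>\<psi> s - \<psi> 0 - s * D\<bar> / \<bar>s\<bar>" by simp
        also have "\<dots> \<le> s^2 * integral\<^sup>L M H / \<bar>s\<bar>" using key s by (intro divide_right_mono) auto
        also have "\<dots> = \<bar>s\<bar> * integral\<^sup>L M H"
        proof -
          have e: "\<bar>s\<bar> * \<bar>s\<bar> = s^2" by (simp add: power2_eq_square)
          have "s^2 * integral\<^sup>L M H / \<bar>s\<bar> = \<bar>s\<bar> * \<bar>s\<bar> * integral\<^sup>L M H / \<bar>s\<bar>" by (simp only: e)
          also have "\<dots> = \<bar>s\<bar> * (\<bar>s\<bar> * integral\<^sup>L M H) / \<bar>s\<bar>" by (simp only: mult.assoc)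
          also have "\<dots> = \<bar>s\<bar> * integral\<^sup>L M H" using s by (intro nonzero_mult_div_cancel_left) simp
          finally show ?thesis .
        qed
        finally show "norm ((\<psi> s - \<psi> 0) / (s - 0) - D) \<le> \<bar>s\<bar> * integral\<^sup>L M H" .
      qed
    qed
    show "((\<lambda>s. \<bar>s\<bar> * integral\<^sup>L M H) \<longlongrightarrow> 0) (at (0::real))"
      by (rule tendsto_eq_intros refl | simp)+
  qed
  then have "((\<lambda>s. (\<psi> s - \<psi> 0) / (s - 0)) \<longlongrightarrow> D) (at 0)"
    by (simp add: LIM_zero_iff)
  then show ?thesis unfolding \<psi>_def[abs_def] D_def[symmetric] by (simp add: has_field_derivative_iff)
qed

context mxc begin

definition ip :: "real^'d \<Rightarrow> 'a \<Rightarrow> real" where "ip t \<omega> = (\<Sum>i\<in>UNIV. t $ i * X i \<omega>)"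

lemma ip_meas[measurable]: "ip t \<in> borel_measurable M" unfolding ip_def by measurable

lemma ip_bound: "\<bar>ip t \<omega>\<bar> \<le> norm t * Sm \<omega>"
proof -
  have "\<bar>ip t \<omega>\<bar> \<le> (\<Sum>i\<in>UNIV. \<bar>t $ i * X i \<omega>\<bar>)" unfolding ip_def by (rule sum_abs)
  also have "\<dots> \<le> (\<Sum>i\<in>UNIV. norm t * \<bar>X i \<omega>\<bar>)"
    by (intro sum_mono) (auto simp: abs_mult intro!: mult_right_mono component_le_norm_cart)
  also have "\<dots> = norm t * Sm \<omega>" unfolding Sm_def by (simp add: sum_distrib_left)
  finally show ?thesis .
qed

lemma ip_axis: "ip (t + u *\<^sub>R axis j 1) \<omega> = ip t \<omega> + u * X j \<omega>"
proof -
  have "ip (t + u *\<^sub>R axis j 1) \<omega> = (\<Sum>i\<in>UNIV. t $ i * X i \<omega> + (if i = j then u * X j \<omega> else 0))"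
    unfolding ip_def by (intro sum.cong) (auto simp: axis_def algebra_simps)
  also have "\<dots> = ip t \<omega> + u * X j \<omega>" unfolding ip_def by (simp add: sum.distrib)
  finally show ?thesis .
qed

lemma ip_diff: "ip t' \<omega> - ip t \<omega> = ip (t' - t) \<omega>"
  unfolding ip_def by (simp add: sum_subtractf algebra_simps)

lemma laplace_ip: "laplaceRV M X t = integral\<^sup>L M (\<lambda>\<omega>. exp (ip t \<omega>))"
  unfolding laplaceRV_def ip_def ..

lemma lin_le_exp: "0 \<le> y \<Longrightarrow> y \<le> exp (y::real)"
  using exp_ge_add_one_self[of y] by linarith

lemma Wb_gen:
  assumes tp: "0 < \<tau>"
  shows "(1 + Sm \<omega>)^3 * exp ((\<tau>/2) * Sm \<omega>) \<le> (1 + 6/\<tau>)^3 * exp (\<tau> * Sm \<omega>)"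
proof -
  let ?S = "Sm \<omega>"
  have S0: "0 \<le> ?S" by (rule Sm_nonneg)
  have a: "?S \<le> (6/\<tau>) * exp ((\<tau>/6) * ?S)"
  proof -
    have "(\<tau>/6) * ?S \<le> exp ((\<tau>/6) * ?S)" using tp S0 by (intro lin_le_exp) simp
    then have "(6/\<tau>) * ((\<tau>/6) * ?S) \<le> (6/\<tau>) * exp ((\<tau>/6) * ?S)" using tp by (intro mult_left_mono) auto
    then show ?thesis using tp by simp
  qed
  have b: "1 \<le> exp ((\<tau>/6) * ?S)" using tp S0 by simp
  have c: "1 + ?S \<le> (1 + 6/\<tau>) * exp ((\<tau>/6) * ?S)"
  proof -
    have "(1 + 6/\<tau>) * exp ((\<tau>/6) * ?S) = exp ((\<tau>/6) * ?S) + (6/\<tau>) * exp ((\<tau>/6) * ?S)"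
      by (simp only: distrib_right mult_1)
    then show ?thesis using a b by linarith
  qed
  have "(1 + ?S)^3 \<le> ((1 + 6/\<tau>) * exp ((\<tau>/6) * ?S))^3" using c S0 by (intro power_mono) auto
  also have "\<dots> = (1 + 6/\<tau>)^3 * exp ((\<tau>/2) * ?S)"
    using exp_of_nat_mult[of 3 "(\<tau>/6) * ?S"] by (simp add: power_mult_distrib)
  finally have "(1 + ?S)^3 * exp ((\<tau>/2) * ?S) \<le> (1 + 6/\<tau>)^3 * exp ((\<tau>/2) * ?S) * exp ((\<tau>/2) * ?S)"
    by (intro mult_right_mono) auto
  also have "\<dots> = (1 + 6/\<tau>)^3 * exp (\<tau> * ?S)" by (simp add: mult.assoc exp_add[symmetric])
  finally show ?thesis .
qed

lemma main_mxc:
  "\<exists>V. open V \<and> (0::real^'d) \<in> V \<and>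
    (\<forall>t\<in>V. integrable M (\<lambda>\<omega>. exp (\<Sum>i\<in>UNIV. t $ i * X i \<omega>))) \<and>
    (\<forall>t\<in>V. \<forall>i. has_partial_at i (laplaceRV M X) t) \<and>
    (\<forall>t\<in>V. \<forall>i j. has_partial_at j (partialD i (laplaceRV M X)) t) \<and>
    (\<forall>i j. continuous_on V (partialD j (partialD i (laplaceRV M X))))"
proof -
  obtain \<tau> where tp: "0 < \<tau>" and iE: "integrable M (\<lambda>\<omega>. exp (\<tau> * Sm \<omega>))"
    using exp_moment_Sm by blast
  define \<rho> where "\<rho> = \<tau> / 4"
  have rp: "0 < \<rho>" unfolding \<rho>_def using tp by simp
  define W where "W \<omega> = (1 + 6/\<tau>)^3 * exp (\<tau> * Sm \<omega>)" for \<omega>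
  have iW: "integrable M W" unfolding W_def by (intro integrable_mult_right iE)
  have Wb: "(1 + Sm \<omega>)^3 * exp (2 * \<rho> * Sm \<omega>) \<le> W \<omega>" for \<omega>
    using Wb_gen[OF tp, of \<omega>] unfolding W_def \<rho>_def by simp
  have S0: "0 \<le> Sm \<omega>" for \<omega> by (rule Sm_nonneg)
  have XS: "\<bar>X i \<omega>\<bar> \<le> Sm \<omega>" for i \<omega> by (rule X_le_Sm)
  have ipS: "ip t \<omega> \<le> \<rho> * Sm \<omega>" if "norm t \<le> \<rho>" for t \<omega>
  proof -
    have "ip t \<omega> \<le> norm t * Sm \<omega>" using ip_bound[of t \<omega>] by simp
    also have "\<dots> \<le> \<rho> * Sm \<omega>" using that S0 by (intro mult_right_mono) auto
    finally show ?thesis .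
  qed
  have poly_le_W: "\<bar>h \<omega>\<bar> * exp (ip t \<omega> + \<rho> * \<bar>X j \<omega>\<bar>) \<le> W \<omega>"
    if "\<bar>h \<omega>\<bar> \<le> (1 + Sm \<omega>)^3" "norm t \<le> \<rho>" for h :: "'a \<Rightarrow> real" and t j \<omega>
  proof -
    have "\<rho> * \<bar>X j \<omega>\<bar> \<le> \<rho> * Sm \<omega>" using XS[of j \<omega>] rp by (intro mult_left_mono) auto
    then have "ip t \<omega> + \<rho> * \<bar>X j \<omega>\<bar> \<le> 2 * \<rho> * Sm \<omega>"
      using ipS[OF that(2), of \<omega>] by simp
    then have "exp (ip t \<omega> + \<rho> * \<bar>X j \<omega>\<bar>) \<le> exp (2 * \<rho> * Sm \<omega>)" by simp
    then have "\<bar>h \<omega>\<bar> * exp (ip t \<omega> + \<rho> * \<bar>X j \<omega>\<bar>) \<le> (1 + Sm \<omega>)^3 * exp (2 * \<rho> * Sm \<omega>)"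
      using that(1) S0[of \<omega>] by (intro mult_mono) auto
    then show ?thesis using Wb[of \<omega>] by linarith
  qed
  have D1: "((\<lambda>u. integral\<^sup>L M (\<lambda>\<omega>. g \<omega> * exp (ip (t + u *\<^sub>R axis j 1) \<omega>))) has_real_derivative
              integral\<^sup>L M (\<lambda>\<omega>. g \<omega> * X j \<omega> * exp (ip t \<omega>))) (at 0)"
    if gm: "g \<in> borel_measurable M" and gb: "\<And>\<omega>. \<bar>g \<omega>\<bar> \<le> 1 + Sm \<omega>" and tn: "norm t \<le> \<rho>" for g t j
  proof -
    have "((\<lambda>u. integral\<^sup>L M (\<lambda>\<omega>. g \<omega> * exp (ip t \<omega> + u * X j \<omega>))) has_real_derivative
              integral\<^sup>L M (\<lambda>\<omega>. g \<omega> * X j \<omega> * exp (ip t \<omega>))) (at 0)"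
    proof (rule deriv_lemma[OF rp gm _ _ iW])
      show "X j \<in> borel_measurable M" by measurable
      show "ip t \<in> borel_measurable M" by measurable
      fix \<omega>
      have "\<bar>g \<omega>\<bar> * (1 + \<bar>X j \<omega>\<bar>)^2 \<le> (1 + Sm \<omega>) * (1 + Sm \<omega>)^2"
        using gb[of \<omega>] XS[of j \<omega>] by (intro mult_mono power_mono) auto
      then have "\<bar>\<bar>g \<omega>\<bar> * (1 + \<bar>X j \<omega>\<bar>)^2\<bar> \<le> (1 + Sm \<omega>)^3" by (simp add: power3_eq_cube power2_eq_square)
      from poly_le_W[of "\<lambda>\<omega>. \<bar>g \<omega>\<bar> * (1 + \<bar>X j \<omega>\<bar>)^2", OF this tn]
      show "\<bar>g \<omega>\<bar> * (1 + \<bar>X j \<omega>\<bar>)^2 * exp (ip t \<omega> + \<rho> * \<bar>X j \<omega>\<bar>) \<le> W \<omega>" by simp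
    qed
    then show ?thesis unfolding ip_axis .
  qed
  define V where "V = ball (0::real^'d) \<rho>"
  have Vn: "norm t < \<rho>" if "t \<in> V" for t using that unfolding V_def by simp
  have intg: "integrable M (\<lambda>\<omega>. h \<omega> * exp (ip t \<omega>))"
    if "h \<in> borel_measurable M" "\<And>\<omega>. \<bar>h \<omega>\<bar> \<le> (1 + Sm \<omega>)^3" "norm t \<le> \<rho>" for h t
  proof (rule Bochner_Integration.integrable_bound[OF iW])
    show "(\<lambda>\<omega>. h \<omega> * exp (ip t \<omega>)) \<in> borel_measurable M" using that(1) by measurable
    show "AE \<omega> in M. norm (h \<omega> * exp (ip t \<omega>)) \<le> norm (W \<omega>)"
    proof (intro AE_I2)
      fix \<omega>
      have "\<bar>h \<omega>\<bar> * exp (ip t \<omega>) \<le> \<bar>h \<omega>\<bar> * exp (ip t \<omega> + \<rho> * \<bar>X undefined \<omega>\<bar>)"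
        using rp by (intro mult_left_mono) auto
      also have "\<dots> \<le> W \<omega>" by (rule poly_le_W[OF that(2,3)])
      finally show "norm (h \<omega> * exp (ip t \<omega>)) \<le> norm (W \<omega>)" by (simp add: abs_mult)
    qed
  qed
  have V_open: "open V" unfolding V_def by simp
  have V0: "(0::real^'d) \<in> V" unfolding V_def using rp by simp
  have Dphi: "((\<lambda>u. laplaceRV M X (t + u *\<^sub>R axis i 1)) has_real_derivative
               integral\<^sup>L M (\<lambda>\<omega>. X i \<omega> * exp (ip t \<omega>))) (at 0)" if tn: "norm t \<le> \<rho>" for t i
  proof -
    have "((\<lambda>u. integral\<^sup>L M (\<lambda>\<omega>. 1 * exp (ip (t + u *\<^sub>R axis i 1) \<omega>))) has_real_derivative
              integral\<^sup>L M (\<lambda>\<omega>. 1 * X i \<omega> * exp (ip t \<omega>))) (at 0)"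
      by (rule D1[OF _ _ tn]) (use S0 in auto)
    then show ?thesis by (simp add: laplace_ip)
  qed
  have P1eq: "partialD i (laplaceRV M X) t = integral\<^sup>L M (\<lambda>\<omega>. X i \<omega> * exp (ip t \<omega>))"
    if "norm t \<le> \<rho>" for i t
    unfolding partialD_def by (rule DERIV_imp_deriv[OF Dphi[OF that]])
  have DP1: "((\<lambda>u. partialD i (laplaceRV M X) (t + u *\<^sub>R axis j 1)) has_real_derivative
               integral\<^sup>L M (\<lambda>\<omega>. X i \<omega> * X j \<omega> * exp (ip t \<omega>))) (at 0)" if tn: "norm t < \<rho>" for t i j
  proof -
    have ev: "eventually (\<lambda>u. partialD i (laplaceRV M X) (t + u *\<^sub>R axis j 1) =
                 integral\<^sup>L M (\<lambda>\<omega>. X i \<omega> * exp (ip (t + u *\<^sub>R axis j 1) \<omega>))) (nhds 0)"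
      unfolding eventually_nhds_metric
    proof (intro exI[of _ "\<rho> - norm t"] conjI allI impI)
      show "0 < \<rho> - norm t" using tn by simp
      fix u :: real assume "dist u 0 < \<rho> - norm t"
      then have u: "\<bar>u\<bar> < \<rho> - norm t" by simp
      have "norm (t + u *\<^sub>R axis j 1) \<le> norm t + norm (u *\<^sub>R axis j (1::real))" by (rule norm_triangle_ineq)
      also have "\<dots> = norm t + \<bar>u\<bar>" by simp
      finally have "norm (t + u *\<^sub>R axis j 1) \<le> \<rho>" using u by simp
      then show "partialD i (laplaceRV M X) (t + u *\<^sub>R axis j 1) =
                 integral\<^sup>L M (\<lambda>\<omega>. X i \<omega> * exp (ip (t + u *\<^sub>R axis j 1) \<omega>))" by (rule P1eq)
    qed
    have D: "((\<lambda>u. integral\<^sup>L M (\<lambda>\<omega>. X i \<omega> * exp (ip (t + u *\<^sub>R axis j 1) \<omega>))) has_real_derivative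
              integral\<^sup>L M (\<lambda>\<omega>. X i \<omega> * X j \<omega> * exp (ip t \<omega>))) (at 0)"
    proof (rule D1)
      show "X i \<in> borel_measurable M" by measurable
      fix \<omega> show "\<bar>X i \<omega>\<bar> \<le> 1 + Sm \<omega>" using XS[of i \<omega>] by simp
    next
      show "norm t \<le> \<rho>" using tn by simp
    qed
    show ?thesis by (subst DERIV_cong_ev[OF refl ev refl]) (rule D)
  qed
  have P2eq: "partialD j (partialD i (laplaceRV M X)) t = integral\<^sup>L M (\<lambda>\<omega>. X i \<omega> * X j \<omega> * exp (ip t \<omega>))"
    if "norm t < \<rho>" for i j t
    unfolding partialD_def[of j] by (rule DERIV_imp_deriv[OF DP1[OF that]])
  have hXX: "\<bar>X i \<omega> * X j \<omega>\<bar> \<le> (1 + Sm \<omega>)^3" for i j \<omega>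
  proof -
    have "\<bar>X i \<omega> * X j \<omega>\<bar> \<le> Sm \<omega> * Sm \<omega>" unfolding abs_mult by (intro mult_mono XS) (auto simp: S0)
    also have "\<dots> \<le> (1 + Sm \<omega>) * ((1 + Sm \<omega>) * (1 + Sm \<omega>))"
      using S0[of \<omega>] by (intro mult_mono) (auto simp: algebra_simps add_increasing)
    finally show ?thesis by (simp add: power3_eq_cube)
  qed
  have lip: "(2 * integral\<^sup>L M W)-lipschitz_on V (\<lambda>t. integral\<^sup>L M (\<lambda>\<omega>. X i \<omega> * X j \<omega> * exp (ip t \<omega>)))" for i j
  proof (rule lipschitz_onI)
    show "0 \<le> 2 * integral\<^sup>L M W"
      unfolding W_def by (intro mult_nonneg_nonneg integral_nonneg_AE AE_I2) (use tp in auto)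
    fix x y assume x: "x \<in> V" and y: "y \<in> V"
    have xn: "norm x \<le> \<rho>" and yn: "norm y \<le> \<rho>" using Vn[OF x] Vn[OF y] by auto
    let ?h = "\<lambda>\<omega>. X i \<omega> * X j \<omega>"
    have ix: "integrable M (\<lambda>\<omega>. ?h \<omega> * exp (ip x \<omega>))" by (rule intg[OF _ hXX xn]) measurable
    have iy: "integrable M (\<lambda>\<omega>. ?h \<omega> * exp (ip y \<omega>))" by (rule intg[OF _ hXX yn]) measurable
    define fD where "fD \<omega> = ?h \<omega> * exp (ip x \<omega>) - ?h \<omega> * exp (ip y \<omega>)" for \<omega>
    have ifD: "integrable M fD" unfolding fD_def by (intro Bochner_Integration.integrable_diff ix iy)
    have pw: "norm (fD \<omega>) \<le> norm (x - y) * (2 * W \<omega>)" for \<omega>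
    proof -
      let ?S = "Sm \<omega>"
      have ea: "exp (ip x \<omega>) \<le> exp (2 * \<rho> * ?S)" using ipS[OF xn, of \<omega>] mult_nonneg_nonneg[OF less_imp_le[OF rp] S0[of \<omega>]] by simp
      have eb: "exp (ip y \<omega>) \<le> exp (2 * \<rho> * ?S)" using ipS[OF yn, of \<omega>] mult_nonneg_nonneg[OF less_imp_le[OF rp] S0[of \<omega>]] by simp
      have d: "\<bar>ip x \<omega> - ip y \<omega>\<bar> \<le> norm (x - y) * ?S" unfolding ip_diff by (rule ip_bound)
      have "norm (fD \<omega>) = \<bar>?h \<omega>\<bar> * \<bar>exp (ip x \<omega>) - exp (ip y \<omega>)\<bar>"
        unfolding fD_def by (simp add: abs_mult[symmetric] right_diff_distrib)
      also have "\<dots> \<le> (?S * ?S) * (\<bar>ip x \<omega> - ip y \<omega>\<bar> * (exp (ip x \<omega>) + exp (ip y \<omega>)))"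
        by (intro mult_mono exp_diff_bound) (auto simp: abs_mult intro: mult_mono XS S0)
      also have "\<dots> \<le> (?S * ?S) * ((norm (x - y) * ?S) * (2 * exp (2 * \<rho> * ?S)))"
      proof -
        have ab: "exp (ip x \<omega>) + exp (ip y \<omega>) \<le> 2 * exp (2 * \<rho> * ?S)" using ea eb by linarith
        show ?thesis using d ab S0[of \<omega>] by (intro mult_left_mono mult_mono) auto
      qed
      also have "\<dots> = norm (x - y) * (2 * (?S * ?S * ?S * exp (2 * \<rho> * ?S)))" by (simp add: algebra_simps)
      also have "\<dots> \<le> norm (x - y) * (2 * W \<omega>)"
      proof -
        have "?S * ?S * ?S \<le> (1 + ?S)^3" using S0[of \<omega>] by (simp add: power3_eq_cube mult_mono)
        then have "?S * ?S * ?S * exp (2 * \<rho> * ?S) \<le> (1 + ?S)^3 * exp (2 * \<rho> * ?S)" by (intro mult_right_mono) auto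
        also have "\<dots> \<le> W \<omega>" by (rule Wb)
        finally show ?thesis by (intro mult_left_mono) auto
      qed
      finally show ?thesis .
    qed
    have "integral\<^sup>L M (\<lambda>\<omega>. ?h \<omega> * exp (ip x \<omega>)) - integral\<^sup>L M (\<lambda>\<omega>. ?h \<omega> * exp (ip y \<omega>)) = integral\<^sup>L M fD"
      unfolding fD_def by (rule Bochner_Integration.integral_diff[OF ix iy, symmetric])
    then have "dist (integral\<^sup>L M (\<lambda>\<omega>. ?h \<omega> * exp (ip x \<omega>))) (integral\<^sup>L M (\<lambda>\<omega>. ?h \<omega> * exp (ip y \<omega>))) = norm (integral\<^sup>L M fD)"
      by (simp add: dist_norm)
    also have "\<dots> \<le> integral\<^sup>L M (\<lambda>\<omega>. norm (fD \<omega>))" by (rule integral_norm_bound)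
    also have "\<dots> \<le> integral\<^sup>L M (\<lambda>\<omega>. norm (x - y) * (2 * W \<omega>))"
      by (rule integral_mono) (auto intro!: integrable_norm ifD integrable_mult_right iW simp: pw[simplified])
    also have "\<dots> = 2 * integral\<^sup>L M W * dist x y" by (simp add: dist_norm)
    finally show "dist (integral\<^sup>L M (\<lambda>\<omega>. ?h \<omega> * exp (ip x \<omega>))) (integral\<^sup>L M (\<lambda>\<omega>. ?h \<omega> * exp (ip y \<omega>))) \<le> 2 * integral\<^sup>L M W * dist x y" .
  qed
  show ?thesis
  proof (intro exI[of _ V] conjI ballI allI)
    show "open V" by (rule V_open)
    show "(0::real^'d) \<in> V" by (rule V0)
    fix t assume t: "t \<in> V"
    show "integrable M (\<lambda>\<omega>. exp (\<Sum>i\<in>UNIV. t $ i * X i \<omega>))"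
      using intg[of "\<lambda>_. 1" t] Vn[OF t] S0 unfolding ip_def by simp
  next
    fix t i assume t: "t \<in> V"
    show "has_partial_at i (laplaceRV M X) t"
      unfolding has_partial_at_def
      by (rule differentiableI, rule has_field_derivative_imp_has_derivative, rule Dphi) (use Vn[OF t] in simp)
  next
    fix t i j assume t: "t \<in> V"
    show "has_partial_at j (partialD i (laplaceRV M X)) t"
      unfolding has_partial_at_def
      by (rule differentiableI, rule has_field_derivative_imp_has_derivative, rule DP1[OF Vn[OF t]])
  next
    fix i j
    have "continuous_on V (\<lambda>t. integral\<^sup>L M (\<lambda>\<omega>. X i \<omega> * X j \<omega> * exp (ip t \<omega>)))"
      by (rule lipschitz_on_continuous_on[OF lip])
    then show "continuous_on V (partialD j (partialD i (laplaceRV M X)))"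
      by (subst continuous_on_cong[OF refl P2eq[OF Vn]]) auto
  qed
qed
end

theorem mainTheorem5:
  fixes M :: "'a measure" and X :: "'d::finite \<Rightarrow> 'a \<Rightarrow> real"
  assumes "prob_space M"
    and "one_Meixner M X"
  shows "\<exists>V. open V \<and> (0::real^'d) \<in> V \<and>
    (\<forall>t\<in>V. integrable M (\<lambda>\<omega>. exp (\<Sum>i\<in>UNIV. t $ i * X i \<omega>))) \<and>
    (\<forall>t\<in>V. \<forall>i. has_partial_at i (laplaceRV M X) t) \<and>
    (\<forall>t\<in>V. \<forall>i j. has_partial_at j (partialD i (laplaceRV M X)) t) \<and>
    (\<forall>i j. continuous_on V (partialD j (partialD i (laplaceRV M X))))"
proof -
  from assms(2) obtain \<alpha> \<beta> where fmX: "finite_moments M X"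
    and c: "\<forall>i j. \<forall>f\<in>polyRV X.
        AE \<omega> in M. Uop M X i (mulX X j f) \<omega> - complex_of_real (X j \<omega>) * Uop M X i f \<omega>
          = (\<Sum>k\<in>UNIV. complex_of_real (\<alpha> i j k) * complex_of_real (X k \<omega>) * f \<omega>)
            + complex_of_real (\<beta> i j) * f \<omega>"
    unfolding one_Meixner_def by blast
  interpret mxc M X \<alpha> \<beta>
    using assms(1) fmX c by (simp add: mxc_def mx_def mxc_axioms_def mx_axioms_def)
  show ?thesis by (rule main_mxc)
qed

end
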